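(* Let $\mu\ge0$ be an integer and let $\gamma\ge0$ and $m\ge\gamma$ be integers. Then $$\mathsf{C}^{(\mu,\mu)}_{\gamma\gamma mm}=\frac12\sum_{\lambda=0}^\gamma\mathsf{M}^{(\mu)}_\gamma(\lambda)\,\mathsf{M}^{(\mu)}_m(\lambda)\,\xi_\lambda(\mu),$$ where $$\xi_\lambda(\mu)=\frac{\pi2^{1-4\mu}\Gamma(2\lambda+4\mu+1)}{(4\lambda+4\mu+1)\Gamma(2\lambda+1)\Gamma(2\mu+\frac12)^2},$$ $$\mathsf{M}^{(\mu)}_m(\lambda)=\frac{1}{2\pi^{3/2}}\frac{(4\lambda+4\mu+1)\Gamma(\lambda+\frac12)\Gamma(2\mu+\frac12)\Gamma(\lambda+\mu+\frac12)}{\Gamma(\lambda+\mu+1)\Gamma(\lambda+2\mu+1)}\cdot\frac{(2\mu+2m+1)\Gamma(m-\lambda+\frac12)\Gamma(m+\lambda+2\mu+1)}{\Gamma(m-\lambda+1)\Gamma(m+\lambda+2\mu+\frac32)}.$$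
   Context: $\omega_n=2n+1+2\mu$. $\mathsf{e}_n(x)=\mathsf{N}_n(1-\cos2x)^{\mu/2}(1+\cos2x)^{\mu/2}P_n^{(\mu,\mu)}(\cos2x)$ with $P_n^{(\mu,\mu)}$ the Jacobi polynomial and $\mathsf{N}_n=\sqrt{\frac{\omega_n}{2^{2\mu}}\frac{\Gamma(n+1)\Gamma(n+2\mu+1)}{\Gamma(n+\mu+1)^2}}$; $\mathsf{C}^{(\mu,\mu)}_{ijkm}=\int_0^{\pi/2}\mathsf{e}_i\mathsf{e}_j\mathsf{e}_k\mathsf{e}_m\sin(2x)\,dx$. *)

theory Defs
  imports "HOL-Analysis.Analysis"
begin

definition jacobiP :: "nat \<Rightarrow> nat \<Rightarrow> nat \<Rightarrow> real \<Rightarrow> real" where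
  "jacobiP n a b x = (\<Sum>s=0..n. real ((n + a) choose (n - s)) * real ((n + b) choose s)
       * ((x - 1) / 2) ^ s * ((x + 1) / 2) ^ (n - s))"

definition omega :: "nat \<Rightarrow> nat \<Rightarrow> real" where
  "omega \<mu> n = 2 * real n + 1 + 2 * real \<mu>"

definition normN :: "nat \<Rightarrow> nat \<Rightarrow> real" where
  "normN \<mu> n = sqrt (omega \<mu> n / 2 ^ (2 * \<mu>) *
      (Gamma (real n + 1) * Gamma (real n + 2 * real \<mu> + 1)) / (Gamma (real n + real \<mu> + 1))\<^sup>2)"

text \<open>(1 - cos 2x)^(mu/2) (1 + cos 2x)^(mu/2), written with sqrt to avoid the 0 powr 0 = 0 convention.\<close>
definition eigf :: "nat \<Rightarrow> nat \<Rightarrow> real \<Rightarrow> real" where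
  "eigf \<mu> n x = normN \<mu> n * sqrt ((1 - cos (2 * x)) ^ \<mu>) * sqrt ((1 + cos (2 * x)) ^ \<mu>)
      * jacobiP n \<mu> \<mu> (cos (2 * x))"

definition Ccoef :: "nat \<Rightarrow> nat \<Rightarrow> nat \<Rightarrow> nat \<Rightarrow> nat \<Rightarrow> real" where
  "Ccoef \<mu> i j k m = integral {0..pi/2}
      (\<lambda>x. eigf \<mu> i x * eigf \<mu> j x * eigf \<mu> k x * eigf \<mu> m x * sin (2 * x))"

definition xi :: "nat \<Rightarrow> nat \<Rightarrow> real" where
  "xi \<mu> l = pi * 2 powr (1 - 4 * real \<mu>) * Gamma (2 * real l + 4 * real \<mu> + 1)
      / ((4 * real l + 4 * real \<mu> + 1) * Gamma (2 * real l + 1) * (Gamma (2 * real \<mu> + 1/2))\<^sup>2)"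

definition Mcoef :: "nat \<Rightarrow> nat \<Rightarrow> nat \<Rightarrow> real" where
  "Mcoef \<mu> m l = 1 / (2 * pi powr (3/2)) *
     ((4 * real l + 4 * real \<mu> + 1) * Gamma (real l + 1/2) * Gamma (2 * real \<mu> + 1/2)
        * Gamma (real l + real \<mu> + 1/2))
     / (Gamma (real l + real \<mu> + 1) * Gamma (real l + 2 * real \<mu> + 1))
   * ((2 * real \<mu> + 2 * real m + 1) * Gamma (real m - real l + 1/2)
        * Gamma (real m + real l + 2 * real \<mu> + 1))
     / (Gamma (real m - real l + 1) * Gamma (real m + real l + 2 * real \<mu> + 3/2))"

end

theory Submission
  imports Defs "HOL-Computational_Algebra.Polynomial"
begin

lemma poch_shift: "pochhammer (x+1) j * x = pochhammer x j * (x + of_nat j)" for x :: real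
  using pochhammer_Suc[of x j] pochhammer_rec[of x j] by (simp add: mult.commute)

definition saalt :: "real \<Rightarrow> real \<Rightarrow> real \<Rightarrow> nat \<Rightarrow> nat \<Rightarrow> real" where
  "saalt A B C N j = pochhammer (- real N) j * pochhammer A j * pochhammer B j /
     (pochhammer C j * pochhammer (1 + A + B - C - real N) j * fact j)"

lemma saalt_vanish: "j > N \<Longrightarrow> saalt A B C N j = 0"
  by (simp add: saalt_def pochhammer_of_nat_eq_0_iff)

lemma saal_step_term:
  fixes A B C :: real and N j :: nat
  assumes C: "\<And>k::nat. C + real k \<noteq> 0"
      and E: "\<And>k::int. A + B - C \<noteq> of_int k"
  defines "e \<equiv> A + B - C - real N"
  defines "g \<equiv> (\<lambda>j::nat. e / (real N + 1) * real j * (real j + C - 1) * saalt A B C (Suc N) j)"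
  shows "(C + N) * (C - A - B + N) * saalt A B C (Suc N) j - (C - A + N) * (C - B + N) * saalt A B C N j
         = g (Suc j) - g j"
proof -
  define X where "X = saalt A B C (Suc N) j"
  have ej: "e + real k \<noteq> 0" for k
  proof
    assume "e + real k = 0"
    hence "A + B - C = of_int (int N - int k)" unfolding e_def by simp
    with E show False by blast
  qed
  have e0: "e \<noteq> 0" using ej[of 0] by simp
  have pe: "pochhammer e k \<noteq> 0" for k
    using ej by (auto simp: pochhammer_eq_0_iff) (metis add.commute add_eq_0_iff2)
  have pC: "pochhammer C k \<noteq> 0" for k
    using C by (auto simp: pochhammer_eq_0_iff) (metis add.commute add_eq_0_iff2)
  have pe1: "pochhammer (e+1) k \<noteq> 0" for k
    using ej by (auto simp: pochhammer_eq_0_iff) (metis add.commute add.left_commute add_eq_0_iff2 of_nat_Suc)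
  have t1: "saalt A B C (Suc N) (Suc j) = X * ((real j - real N - 1) * (A + j) * (B + j)) / ((C + j) * (e + j) * (real j + 1))"
    unfolding X_def saalt_def e_def
    using C[of j] ej[of j] pe pC
    by (simp add: pochhammer_Suc field_simps e_def)
  have t0: "saalt A B C N j = X * (real N + 1 - real j) * e / ((real N + 1) * (e + j))"
  proof -
    have a1: "pochhammer (- real N) j = pochhammer (- (real N + 1)) j * ((real N + 1 - real j) / (real N + 1))"
      using poch_shift[of "- (real N + 1)" j] by (simp add: field_simps)
    have a2: "pochhammer (e + 1) j = pochhammer e j * (e + j) / e"
      using poch_shift[of e j] e0 by (simp add: field_simps)
    have b1: "1 + A + B - C - real N = e + 1" unfolding e_def by simp
    have b2: "1 + A + B - C - real (Suc N) = e" unfolding e_def by simp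
    show ?thesis
      unfolding X_def saalt_def b1 b2 a1 a2
      using pe pC ej[of j] e0
      by (simp add: field_simps)
  qed
  have key: "(C+N)*(C-A-B+N)*(real N+1)*(e+real j) - (C-A+N)*(C-B+N)*(real N+1-real j)*e
      = e*(real j-real N-1)*(A+j)*(B+j) - e*j*(j+C-1)*(e+j)"
    unfolding e_def by (simp add: algebra_simps)
  have N1: "real N + 1 \<noteq> 0" by simp
  have Cj: "C + real j \<noteq> 0" using C by simp
  have lhs: "(C + N) * (C - A - B + N) * X - (C - A + N) * (C - B + N) * (X * (real N + 1 - real j) * e / ((real N + 1) * (e + j)))
     = X * ((C+N)*(C-A-B+N)*(real N+1)*(e+real j) - (C-A+N)*(C-B+N)*(real N+1-real j)*e) / ((real N+1)*(e+real j))"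
    using ej[of j] N1 by (simp add: divide_simps) (simp add: algebra_simps)
  have rhs: "e / (real N + 1) * real (Suc j) * (real (Suc j) + C - 1) * (X * ((real j - real N - 1) * (A + j) * (B + j)) / ((C + j) * (e + j) * (real j + 1)))
      - e / (real N + 1) * real j * (real j + C - 1) * X
     = X * (e*(real j-real N-1)*(A+j)*(B+j) - e*j*(j+C-1)*(e+j)) / ((real N+1)*(e+real j))"
    using ej[of j] N1 Cj by (simp add: divide_simps) (simp add: algebra_simps)
  show ?thesis
    unfolding g_def t1 t0 X_def[symmetric] lhs rhs key ..
qed

lemma saalschuetz:
  fixes A B C :: real and N :: nat
  assumes C: "\<And>k::nat. C + real k \<noteq> 0"
      and E: "\<And>k::int. A + B - C \<noteq> of_int k"
  shows "pochhammer C N * pochhammer (C - A - B) N * (\<Sum>j\<le>N. saalt A B C N j)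
          = pochhammer (C - A) N * pochhammer (C - B) N"
proof (induction N)
  case 0
  then show ?case by (simp add: saalt_def)
next
  case (Suc N)
  define e where "e = A + B - C - real N"
  define g where "g = (\<lambda>j::nat. e / (real N + 1) * real j * (real j + C - 1) * saalt A B C (Suc N) j)"
  have tel: "(\<Sum>j<Suc (Suc N). (C + N) * (C - A - B + N) * saalt A B C (Suc N) j - (C - A + N) * (C - B + N) * saalt A B C N j)
       = (\<Sum>j<Suc (Suc N). g (Suc j) - g j)"
    unfolding g_def e_def by (rule sum.cong[OF refl], rule saal_step_term[OF C E])
  also have "\<dots> = g (Suc (Suc N)) - g 0" by (rule sum_lessThan_telescope)
  also have "\<dots> = 0" by (simp add: g_def saalt_vanish)
  finally have tel1: "(\<Sum>j<Suc (Suc N). (C + N) * (C - A - B + N) * saalt A B C (Suc N) j - (C - A + N) * (C - B + N) * saalt A B C N j) = 0" .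
  have "(\<Sum>j<Suc (Suc N). (C + N) * (C - A - B + N) * saalt A B C (Suc N) j - (C - A + N) * (C - B + N) * saalt A B C N j)
     = (C + N) * (C - A - B + N) * (\<Sum>j<Suc (Suc N). saalt A B C (Suc N) j) - (C - A + N) * (C - B + N) * (\<Sum>j<Suc (Suc N). saalt A B C N j)"
    by (simp only: sum_subtractf sum_distrib_left)
  with tel1 have tel0: "(C + N) * (C - A - B + N) * (\<Sum>j<Suc (Suc N). saalt A B C (Suc N) j)
       = (C - A + N) * (C - B + N) * (\<Sum>j<Suc (Suc N). saalt A B C N j)"
    by simp
  have s1: "(\<Sum>j<Suc (Suc N). saalt A B C (Suc N) j) = (\<Sum>j\<le>Suc N. saalt A B C (Suc N) j)"
    by (simp add: lessThan_Suc_atMost)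
  have s0: "(\<Sum>j<Suc (Suc N). saalt A B C N j) = (\<Sum>j\<le>N. saalt A B C N j)"
    by (simp add: lessThan_Suc_atMost saalt_vanish)
  have "pochhammer C (Suc N) * pochhammer (C - A - B) (Suc N) * (\<Sum>j\<le>Suc N. saalt A B C (Suc N) j)
      = pochhammer C N * pochhammer (C - A - B) N * ((C + N) * (C - A - B + N) * (\<Sum>j\<le>Suc N. saalt A B C (Suc N) j))"
    by (simp add: pochhammer_Suc algebra_simps)
  also have "\<dots> = pochhammer C N * pochhammer (C - A - B) N * ((C - A + N) * (C - B + N) * (\<Sum>j\<le>N. saalt A B C N j))"
    using tel0 s1 s0 by simp
  also have "\<dots> = (pochhammer C N * pochhammer (C - A - B) N * (\<Sum>j\<le>N. saalt A B C N j)) * ((C - A + N) * (C - B + N))"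
    by (simp add: algebra_simps)
  also have "\<dots> = pochhammer (C - A) (Suc N) * pochhammer (C - B) (Suc N)"
    unfolding Suc.IH by (simp add: pochhammer_Suc algebra_simps)
  finally show ?case .
qed

lemma pderiv_sum': "pderiv (sum f A) = (\<Sum>x\<in>A. pderiv (f x))"
  using higher_pderiv_sum[of 1 f A] by simp

definition Bp :: "real poly" where "Bp = [:-1/2, 1/2:]"
definition Ap :: "real poly" where "Ap = [:1/2, 1/2:]"
definition Xp :: "real poly" where "Xp = [:0, 1:]"
definition Wp :: "real poly" where "Wp = [:1, 0, -1:]"

lemma pderiv_Bp [simp]: "pderiv Bp = [:1/2:]" by (simp add: Bp_def pderiv_pCons)
lemma pderiv_Ap [simp]: "pderiv Ap = [:1/2:]" by (simp add: Ap_def pderiv_pCons)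
lemma pderiv_Xp [simp]: "pderiv Xp = 1" by (simp add: Xp_def pderiv_pCons one_pCons)
lemma pderiv_Wp: "pderiv Wp = smult (-2) Xp" by (simp add: Wp_def Xp_def pderiv_pCons)
lemma Wp_AB: "Wp = smult (-4) (Ap * Bp)" by (simp add: Wp_def Ap_def Bp_def)
lemma Xp_AB: "Xp = Ap + Bp" by (simp add: Xp_def Ap_def Bp_def)
lemma Xp_sq: "Xp * Xp = 1 - Wp" by (simp add: Xp_def Wp_def one_pCons)

definition form :: "nat \<Rightarrow> (nat \<Rightarrow> real) \<Rightarrow> real poly" where
  "form k f = (\<Sum>i\<le>k. smult (f i) (Bp ^ i * Ap ^ (k - i)))"

lemma form_add: "form k f + form k g = form k (\<lambda>i. f i + g i)"
  by (simp add: form_def sum.distrib smult_add_left)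

lemma form_diff: "form k f - form k g = form k (\<lambda>i. f i - g i)"
  by (simp add: form_def sum_subtractf smult_diff_left)

lemma smult_sum_right: "smult c (sum g A) = (\<Sum>i\<in>A. smult c (g i))"
  by (induction A rule: infinite_finite_induct) (simp_all add: smult_add_right)

lemma form_smult: "smult c (form k f) = form k (\<lambda>i. c * f i)"
  by (simp add: form_def smult_sum_right)

lemma form_zero: "(\<And>i. i \<le> k \<Longrightarrow> f i = 0) \<Longrightarrow> form k f = 0"
  by (simp add: form_def)

lemma form_cong: "(\<And>i. i \<le> k \<Longrightarrow> f i = g i) \<Longrightarrow> form k f = form k g"
  by (simp add: form_def)

lemma form_A: "f (Suc k) = 0 \<Longrightarrow> Ap * form k f = form (Suc k) f"
proof -
  assume z: "f (Suc k) = 0"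
  have "Ap * form k f = (\<Sum>i\<le>k. smult (f i) (Bp ^ i * Ap ^ (Suc k - i)))"
    unfolding form_def sum_distrib_left
    by (rule sum.cong) (auto simp: Suc_diff_le mult_ac)
  also have "\<dots> = form (Suc k) f" by (simp add: form_def z)
  finally show ?thesis .
qed

lemma form_B: "Bp * form k f = form (Suc k) (\<lambda>i. case i of 0 \<Rightarrow> 0 | Suc j \<Rightarrow> f j)"
proof -
  have "Bp * form k f = (\<Sum>i\<le>k. smult (f i) (Bp ^ Suc i * Ap ^ (Suc k - Suc i)))"
    unfolding form_def sum_distrib_left
    by (rule sum.cong) (auto simp: mult_ac)
  also have "\<dots> = form (Suc k) (\<lambda>i. case i of 0 \<Rightarrow> 0 | Suc j \<Rightarrow> f j)"
    unfolding form_def by (subst sum.atMost_Suc_shift) simp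
  finally show ?thesis .
qed

lemma pderiv_BA: "pderiv (Bp ^ i * Ap ^ r) =
   smult (real i / 2) (Bp ^ (i - 1) * Ap ^ r) + smult (real r / 2) (Bp ^ i * Ap ^ (r - 1))"
  by (cases i; cases r) (simp_all add: pderiv_mult pderiv_power_Suc algebra_simps del: power_Suc)

lemma form_deriv: "pderiv (form (Suc k) f) =
   form k (\<lambda>i. (real (Suc i) * f (Suc i) + real (Suc k - i) * f i) / 2)"
proof -
  have "pderiv (form (Suc k) f) = (\<Sum>i\<le>Suc k. smult (f i * real i / 2) (Bp ^ (i - 1) * Ap ^ (Suc k - i)))
      + (\<Sum>i\<le>Suc k. smult (f i * real (Suc k - i) / 2) (Bp ^ i * Ap ^ (Suc k - i - 1)))"
    unfolding form_def pderiv_sum' pderiv_smult pderiv_BA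
    by (simp add: sum.distrib smult_add_right)
  also have "(\<Sum>i\<le>Suc k. smult (f i * real i / 2) (Bp ^ (i - 1) * Ap ^ (Suc k - i)))
       = (\<Sum>i\<le>k. smult (f (Suc i) * real (Suc i) / 2) (Bp ^ i * Ap ^ (k - i)))"
    by (subst sum.atMost_Suc_shift) simp
  also have "(\<Sum>i\<le>Suc k. smult (f i * real (Suc k - i) / 2) (Bp ^ i * Ap ^ (Suc k - i - 1)))
       = (\<Sum>i\<le>k. smult (f i * real (Suc k - i) / 2) (Bp ^ i * Ap ^ (k - i)))"
    by (simp del: of_nat_Suc)
  also have "(\<Sum>i\<le>k. smult (f (Suc i) * real (Suc i) / 2) (Bp ^ i * Ap ^ (k - i)))
      + (\<Sum>i\<le>k. smult (f i * real (Suc k - i) / 2) (Bp ^ i * Ap ^ (k - i)))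
      = form k (\<lambda>i. (real (Suc i) * f (Suc i) + real (Suc k - i) * f i) / 2)"
    unfolding form_def sum.distrib[symmetric] smult_add_left[symmetric]
    by (rule sum.cong[OF refl]) (simp only: add_divide_distrib mult.commute)
  finally show ?thesis .
qed

definition cc :: "nat \<Rightarrow> nat \<Rightarrow> nat \<Rightarrow> real" where
  "cc \<mu> n i = (if i \<le> n then real ((n + \<mu>) choose (n - i)) * real ((n + \<mu>) choose i) else 0)"

definition Yp :: "nat \<Rightarrow> nat \<Rightarrow> real poly" where
  "Yp \<mu> n = form n (cc \<mu> n)"

lemma poly_form: "poly (form k f) t = (\<Sum>i\<le>k. f i * ((t - 1) / 2) ^ i * ((t + 1) / 2) ^ (k - i))"
  by (simp add: form_def poly_sum Bp_def Ap_def field_simps)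

lemma poly_Yp: "poly (Yp \<mu> n) t = jacobiP n \<mu> \<mu> t"
  unfolding Yp_def poly_form jacobiP_def
  by (rule sum.cong) (auto simp: cc_def)

lemma choose_rel: "real (Suc k) * real (M choose Suc k) = real (M - k) * real (M choose k)"
proof -
  have "Suc k * (M choose Suc k) = (M - k) * (M choose k)"
    using binomial_absorption[of k M] binomial_absorb_comp[of M k] by simp
  then show ?thesis by (metis of_nat_mult)
qed

lemma cc_rel: "cc \<mu> n (Suc i) * (real i + 1) * (real i + 1 + \<mu>) = cc \<mu> n i * (real n - real i) * (real n - real i + \<mu>)"
proof (cases "i < n")
  case True
  define M where "M = n + \<mu>"
  have r1: "real (Suc i) * real (M choose Suc i) = real (M - i) * real (M choose i)"
    by (rule choose_rel)
  have r2: "real (Suc (n - Suc i)) * real (M choose Suc (n - Suc i)) = real (M - (n - Suc i)) * real (M choose (n - Suc i))"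
    by (rule choose_rel)
  have e1: "Suc (n - Suc i) = n - i" using True by simp
  have e2: "real (M - (n - Suc i)) = real i + 1 + \<mu>" using True by (simp add: M_def of_nat_diff)
  have e3: "real (M - i) = real n - real i + \<mu>" using True by (simp add: M_def of_nat_diff)
  have e4: "real (n - i) = real n - real i" using True by (simp add: of_nat_diff)
  from r2 have r2': "real (M choose (n - Suc i)) * (real i + 1 + \<mu>) = (real n - real i) * real (M choose (n - i))"
    unfolding e1 e2 e4 by (simp add: mult.commute)
  have "cc \<mu> n (Suc i) * (real i + 1) * (real i + 1 + \<mu>)
     = (real (M choose (n - Suc i)) * (real i + 1 + \<mu>)) * (real (Suc i) * real (M choose Suc i))"
    using True by (simp add: cc_def M_def algebra_simps)
  also have "\<dots> = ((real n - real i) * real (M choose (n - i))) * (real (M - i) * real (M choose i))"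
    unfolding r2' r1 ..
  also have "\<dots> = cc \<mu> n i * (real n - real i) * (real n - real i + \<mu>)"
    using True unfolding e3 by (simp add: cc_def M_def algebra_simps)
  finally show ?thesis .
next
  case False
  then show ?thesis by (auto simp: cc_def)
qed

lemma jac_ode: "Wp * pderiv (pderiv (Yp \<mu> n)) =
   smult (2 * real \<mu> + 2) (Xp * pderiv (Yp \<mu> n)) - smult (real n * (real n + 2 * real \<mu> + 1)) (Yp \<mu> n)"
proof (cases n)
  case 0
  then show ?thesis by (simp add: Yp_def form_def)
next
  case (Suc n1)
  note n1 = Suc
  show ?thesis
  proof (cases n1)
    case 0
    have c0: "cc \<mu> (Suc 0) 0 = 1 + real \<mu>" and c1: "cc \<mu> (Suc 0) (Suc 0) = 1 + real \<mu>" by (simp_all add: cc_def)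
    have Y: "Yp \<mu> (Suc 0) = smult (1 + real \<mu>) (Ap + Bp)"
      by (simp add: Yp_def form_def c0 c1 smult_add_right)
    show ?thesis unfolding n1 0 Y
      by (simp add: Ap_def Bp_def Xp_def pderiv_pCons pderiv_smult pderiv_add algebra_simps)
  next
    case (Suc k)
    have n: "n = Suc (Suc k)" using n1 Suc by simp
    define c where "c = cc \<mu> n"
    define d where "d = (\<lambda>i. (real (Suc i) * c (Suc i) + real (Suc (Suc k) - i) * c i) / 2)"
    define e where "e = (\<lambda>i. (real (Suc i) * d (Suc i) + real (Suc k - i) * d i) / 2)"
    have Y: "Yp \<mu> n = form (Suc (Suc k)) c" by (simp add: Yp_def c_def n)
    have Y1: "pderiv (Yp \<mu> n) = form (Suc k) d" unfolding Y form_deriv d_def ..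
    have Y2: "pderiv (pderiv (Yp \<mu> n)) = form k e" unfolding Y1 form_deriv e_def ..
    have c3: "c (Suc (Suc (Suc k))) = 0" by (simp add: c_def cc_def n)
    have d2: "d (Suc (Suc k)) = 0" by (simp add: d_def c3)
    define e1 where "e1 = (\<lambda>i. case i of 0 \<Rightarrow> 0 | Suc j \<Rightarrow> e j)"
    define d1 where "d1 = (\<lambda>i. case i of 0 \<Rightarrow> 0 | Suc j \<Rightarrow> d j)"
    have e1z: "e1 (Suc (Suc k)) = 0" by (simp add: e1_def e_def d2)
    have WY: "Wp * pderiv (pderiv (Yp \<mu> n)) = form (Suc (Suc k)) (\<lambda>i. -4 * e1 i)"
    proof -
      have "Wp * form k e = smult (-4) (Ap * (Bp * form k e))" by (simp add: Wp_AB mult.assoc)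
      also have "Bp * form k e = form (Suc k) e1" by (simp add: form_B e1_def)
      also have "Ap * form (Suc k) e1 = form (Suc (Suc k)) e1" by (rule form_A[of e1 "Suc k", OF e1z])
      finally show ?thesis unfolding Y2 form_smult by simp
    qed
    have XY: "Xp * pderiv (Yp \<mu> n) = form (Suc (Suc k)) (\<lambda>i. d i + d1 i)"
      unfolding Y1 Xp_AB distrib_right form_A[of d "Suc k", OF d2] form_B d1_def[symmetric] form_add ..
    have phi: "-4 * e1 i - (2 * real \<mu> + 2) * (d i + d1 i) + real n * (real n + 2 * real \<mu> + 1) * c i = 0"
      if "i \<le> Suc (Suc k)" for i
    proof (cases i)
      case 0
      have R: "c 1 * (0 + 1) * (0 + 1 + \<mu>) = c 0 * (real n - 0) * (real n - 0 + \<mu>)"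
        using cc_rel[of \<mu> n 0] by (simp add: c_def)
      show ?thesis using R unfolding 0 e1_def d1_def d_def n
        by (simp add: algebra_simps)
    next
      case (Suc j)
      have jk: "j \<le> Suc k" using that Suc by simp
      have R0: "c (Suc j) * (real j + 1) * (real j + 1 + \<mu>) = c j * (real n - real j) * (real n - real j + \<mu>)"
        using cc_rel[of \<mu> n j] by (simp add: c_def)
      have R1: "c (Suc (Suc j)) * (real j + 2) * (real j + 2 + \<mu>) = c (Suc j) * (real n - real j - 1) * (real n - real j - 1 + \<mu>)"
        using cc_rel[of \<mu> n "Suc j"] by (simp add: c_def algebra_simps)
      have s1: "real (Suc (Suc k) - j) = real k + 2 - real j" using jk by (simp add: of_nat_diff)
      have s2: "real (Suc k - j) = real k + 1 - real j" using jk by (simp add: of_nat_diff)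
      have s3: "real (Suc (Suc k) - Suc j) = real k + 1 - real j" using jk by (simp add: of_nat_diff)
      have eq: "-4 * e1 (Suc j) - (2 * real \<mu> + 2) * (d (Suc j) + d1 (Suc j)) + real n * (real n + 2 * real \<mu> + 1) * c (Suc j)
         = (c (Suc j) * (real j + 1) * (real j + 1 + \<mu>) - c j * (real n - real j) * (real n - real j + \<mu>))
         - (c (Suc (Suc j)) * (real j + 2) * (real j + 2 + \<mu>) - c (Suc j) * (real n - real j - 1) * (real n - real j - 1 + \<mu>))"
        unfolding e1_def d1_def e_def d_def n
        by (simp add: s1 s2 s3 field_simps)
      show ?thesis unfolding Suc eq using R0 R1 by simp
    qed
    have "Wp * pderiv (pderiv (Yp \<mu> n)) - (smult (2 * real \<mu> + 2) (Xp * pderiv (Yp \<mu> n)) - smult (real n * (real n + 2 * real \<mu> + 1)) (Yp \<mu> n))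
        = form (Suc (Suc k)) (\<lambda>i. -4 * e1 i - (2 * real \<mu> + 2) * (d i + d1 i) + real n * (real n + 2 * real \<mu> + 1) * c i)"
      apply (simp only: WY XY)
      apply (simp only: Y form_smult form_diff)
      by (rule form_cong) simp
    also have "\<dots> = 0" by (rule form_zero) (rule phi)
    finally show ?thesis by simp
  qed
qed

definition GG :: "real \<Rightarrow> real \<Rightarrow> real poly \<Rightarrow> real poly" where
  "GG a E u = Wp * pderiv (pderiv u) - smult a (Xp * pderiv u) + smult (2 * E) u"

definition theta :: "real \<Rightarrow> real \<Rightarrow> real poly \<Rightarrow> real poly" where
  "theta a E u = Wp * pderiv (GG a E u) - smult (2 * a - 2) (Xp * GG a E u) + smult (2 * E) (Wp * pderiv u)"

lemma const_mult: "[:x * y:] = [:x:] * [:y:]" for x y :: real by simp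
lemma const_diff: "[:x - y:] = [:x:] - [:y:]" for x y :: real by simp
lemma smult_as_mult: "smult c p = [:c:] * p" by simp
lemma const_neg_two: "[:-2:] = -(2::real poly)" by (simp add: numeral_poly)
lemma const_two: "[:2:] = (2::real poly)" by (simp add: numeral_poly)

lemma theta_sq:
  assumes H: "Wp * pderiv (pderiv y) = smult a (Xp * pderiv y) - smult E y"
  shows "theta a E (y * y) = 0"
proof -
  define y1 where "y1 = pderiv y"
  define y2 where "y2 = pderiv y1"
  define y3 where "y3 = pderiv y2"
  have H0: "Wp * y2 - [:a:] * (Xp * y1) + [:E:] * y = 0" using H by (simp add: y1_def y2_def)
  have "pderiv (Wp * y2 - [:a:] * (Xp * y1) + [:E:] * y) = 0" unfolding H0 by simp
  then have H1: "[:-2:] * Xp * y2 + Wp * y3 - [:a:] * (y1 + Xp * y2) + [:E:] * y1 = 0"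
    by (simp add: pderiv_add pderiv_diff pderiv_mult pderiv_smult pderiv_Wp y1_def[symmetric] y2_def[symmetric] y3_def[symmetric] algebra_simps smult_add_right)
  have H0': "Wp * y2 - [:a:] * (Xp * y1) + [:E:] * y = 0" by (rule H0)
  have H1': "- 2 * Xp * y2 + Wp * y3 - [:a:] * (y1 + Xp * y2) + [:E:] * y1 = 0"
    using H1 unfolding const_neg_two by simp
  show ?thesis
    unfolding theta_def GG_def pderiv_add pderiv_diff pderiv_mult pderiv_smult pderiv_Wp pderiv_Xp
      y1_def[symmetric] y2_def[symmetric] y3_def[symmetric]
    unfolding smult_as_mult const_mult const_diff const_two const_neg_two
    using H0' H1' by algebra
qed

lemma const_add: "[:x + y:] = [:x:] + [:y:]" for x y :: real by simp
lemma const_nat: "[:real n:] = (of_nat n :: real poly)" by (simp add: of_nat_poly)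
lemma const_minus: "[:- x:] = - [:x:]" for x :: real by simp
lemma const_numeral: "[:numeral n:] = (numeral n :: real poly)" by (simp add: numeral_poly)
lemma const_one: "[:1:] = (1::real poly)" by (simp add: one_pCons)
lemma Xp_sq': "Xp * Xp = 1 - Wp" by (simp add: Xp_def Wp_def one_pCons)

definition thetam :: "real \<Rightarrow> real \<Rightarrow> real \<Rightarrow> real" where
  "thetam a E x = - (4 * x * (x - 1) + 2 * a * x) * (2 * x + 2 * a - 4)"
definition theta0 :: "real \<Rightarrow> real \<Rightarrow> real \<Rightarrow> real" where
  "theta0 a E x = - (2 * E - 2 * x - 4 * x * (x - 1) - 2 * a * x) * (2 * x + 2 * a - 2) - 4 * E * x"

lemma GG_W2: "GG a E (Wp ^ Suc (Suc i)) =
   smult (4 * (real i + 2) * (real i + 1) + 2 * a * (real i + 2)) (Wp ^ Suc i)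
 + smult (2 * E - 2 * (real i + 2) - 4 * (real i + 2) * (real i + 1) - 2 * a * (real i + 2)) (Wp ^ Suc (Suc i))"
proof -
  have XX: "Xp * Xp = 1 - Wp" by (rule Xp_sq')
  define V where "V = Wp ^ i"
  define m where "m = (of_nat i :: real poly)"
  show ?thesis
    unfolding GG_def pderiv_power_Suc pderiv_mult pderiv_smult pderiv_Wp pderiv_Xp
    unfolding smult_as_mult const_mult const_diff const_add const_two const_neg_two const_nat const_one const_numeral const_minus power_Suc of_nat_Suc
    unfolding V_def[symmetric] m_def[symmetric]
    using XX by algebra
qed

lemma theta_W2: "theta a E (Wp ^ Suc (Suc i)) = Xp * (smult (thetam a E (real i + 2)) (Wp ^ Suc i) + smult (theta0 a E (real i + 2)) (Wp ^ Suc (Suc i)))"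
proof -
  define AA where "AA = [:a:]"
  define EE where "EE = [:E:]"
  have XX: "Xp * Xp = 1 - Wp" by (rule Xp_sq')
  define V where "V = Wp ^ i"
  define m where "m = (of_nat i :: real poly)"
  show ?thesis
    unfolding theta_def GG_W2 thetam_def theta0_def
    unfolding pderiv_power_Suc pderiv_mult pderiv_smult pderiv_Wp pderiv_Xp pderiv_add
    unfolding smult_as_mult const_mult const_diff const_add const_two const_neg_two const_nat const_one const_numeral const_minus power_Suc of_nat_Suc
    unfolding V_def[symmetric] m_def[symmetric] AA_def[symmetric] EE_def[symmetric]
    by algebra
qed

lemma theta_W1: "theta a E Wp = Xp * (smult (thetam a E 1) 1 + smult (theta0 a E 1) Wp)"
proof -
  have XX: "Xp * Xp = 1 - Wp" by (rule Xp_sq')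
  show ?thesis
    unfolding theta_def GG_def thetam_def theta0_def
    unfolding pderiv_mult pderiv_smult pderiv_Wp pderiv_Xp pderiv_add pderiv_diff pderiv_1
    unfolding smult_as_mult const_mult const_diff const_add const_two const_neg_two const_one const_numeral const_minus
    using XX by algebra
qed

lemma theta_W0: "theta a E 1 = Xp * smult (theta0 a E 0) 1"
proof -
  define AA where "AA = [:a:]"
  define EE where "EE = [:E:]"
  show ?thesis
  unfolding theta_def GG_def thetam_def theta0_def
  unfolding pderiv_1 pderiv_smult pderiv_mult pderiv_add pderiv_diff pderiv_Xp pderiv_Wp
  unfolding smult_as_mult const_mult const_diff const_add const_two const_neg_two const_one const_numeral const_minus
  unfolding AA_def[symmetric] EE_def[symmetric] pderiv_0 pCons_0_0
  by algebra
qed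

lemma theta_Wpow: "theta a E (Wp ^ Suc j) = Xp * (smult (thetam a E (real (Suc j))) (Wp ^ j) + smult (theta0 a E (real (Suc j))) (Wp ^ Suc j))"
proof (cases j)
  case 0
  then show ?thesis using theta_W1[of a E] by simp
next
  case (Suc i)
  then show ?thesis using theta_W2[of a E i] by (simp add: add.commute)
qed

definition Wsum :: "nat \<Rightarrow> (nat \<Rightarrow> real) \<Rightarrow> real poly" where
  "Wsum K c = (\<Sum>k\<le>K. smult (c k) (Wp ^ k))"

lemma GG_add: "GG a E (p + q) = GG a E p + GG a E q"
  by (simp add: GG_def pderiv_add algebra_simps smult_add_right)
lemma GG_smult: "GG a E (smult c p) = smult c (GG a E p)"
  by (simp add: GG_def pderiv_smult algebra_simps smult_add_right smult_diff_right)
lemma theta_add: "theta a E (p + q) = theta a E p + theta a E q"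
  by (simp add: theta_def GG_add pderiv_add algebra_simps smult_add_right)
lemma theta_smult: "theta a E (smult c p) = smult c (theta a E p)"
  by (simp add: theta_def GG_smult pderiv_smult algebra_simps smult_add_right smult_diff_right)
lemma theta_zero: "theta a E 0 = 0"
  using theta_smult[of a E 0 0] by simp
lemma theta_sum: "theta a E (sum f A) = (\<Sum>x\<in>A. theta a E (f x))"
  by (induction A rule: infinite_finite_induct) (simp_all add: theta_zero theta_add)

lemma theta_Wpow': "theta a E (Wp ^ k) = Xp * (smult (theta0 a E (real k)) (Wp ^ k) +
     (if k = 0 then 0 else smult (thetam a E (real k)) (Wp ^ (k - 1))))"
proof (cases k)
  case 0 then show ?thesis by (simp add: theta_W0)
next
  case (Suc j) then show ?thesis using theta_Wpow[of a E j] by (simp add: algebra_simps)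
qed

lemma theta_Wsum:
  assumes "c (Suc K) = 0"
  shows "theta a E (Wsum K c) = Xp * Wsum K (\<lambda>k. c k * theta0 a E (real k) + c (Suc k) * thetam a E (real (Suc k)))"
proof -
  have "theta a E (Wsum K c) = (\<Sum>k\<le>K. Xp * smult (c k * theta0 a E (real k)) (Wp ^ k))
      + (\<Sum>k\<le>K. if k = 0 then 0 else Xp * smult (c k * thetam a E (real k)) (Wp ^ (k - 1)))"
    unfolding Wsum_def theta_sum theta_smult theta_Wpow'
    by (simp add: sum.distrib[symmetric] algebra_simps smult_add_right if_distrib cong: if_cong)
  also have "(\<Sum>k\<le>K. if k = 0 then 0 else Xp * smult (c k * thetam a E (real k)) (Wp ^ (k - 1)))
      = (\<Sum>k<K. Xp * smult (c (Suc k) * thetam a E (real (Suc k))) (Wp ^ k))"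
    by (subst sum.atMost_shift) simp
  also have "\<dots> = (\<Sum>k\<le>K. Xp * smult (c (Suc k) * thetam a E (real (Suc k))) (Wp ^ k))"
    using assms by (simp add: lessThan_Suc_atMost[symmetric])
  finally show ?thesis
    unfolding Wsum_def by (simp add: sum_distrib_left sum.distrib[symmetric] smult_add_left algebra_simps)
qed

lemma degree_Wp [simp]: "degree Wp = 2" by (simp add: Wp_def)
lemma lead_coeff_Wp [simp]: "lead_coeff Wp = -1" by (simp add: Wp_def)
lemma Wp_nz [simp]: "Wp \<noteq> 0" by (simp add: Wp_def)
lemma degree_Wpow [simp]: "degree (Wp ^ k) = 2 * k" by (simp add: degree_power_eq)
lemma coeff_Wpow_top: "coeff (Wp ^ k) (2 * k) = (-1) ^ k"
proof -
  have "coeff Wp 2 = -1" by (simp add: Wp_def numeral_2_eq_2)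
  then show ?thesis using lead_coeff_power[of Wp k] by simp
qed
lemma poly_Wp [simp]: "poly Wp t = 1 - t^2" by (simp add: Wp_def power2_eq_square)

lemma degree_Wsum: "degree (Wsum K c) \<le> 2 * K"
proof (induction K)
  case 0 then show ?case by (simp add: Wsum_def)
next
  case (Suc K)
  have eq: "Wsum (Suc K) c = Wsum K c + smult (c (Suc K)) (Wp ^ Suc K)"
    by (simp add: Wsum_def)
  have "degree (smult (c (Suc K)) (Wp ^ Suc K)) \<le> 2 * Suc K"
    using degree_smult_le[of "c (Suc K)" "Wp ^ Suc K"] degree_Wpow[of "Suc K"] by (simp del: power_Suc)
  then show ?case unfolding eq using Suc.IH
    by (intro degree_add_le) auto
qed

lemma Wsum_zero_imp: "Wsum K c = 0 \<Longrightarrow> k \<le> K \<Longrightarrow> c k = 0"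
proof (induction K arbitrary: k)
  case 0
  then show ?case by (simp add: Wsum_def)
next
  case (Suc K)
  have eq: "Wsum (Suc K) c = Wsum K c + smult (c (Suc K)) (Wp ^ Suc K)"
    by (simp add: Wsum_def)
  have "coeff (Wsum K c) (2 * Suc K) = 0"
    by (rule coeff_eq_0) (use degree_Wsum[of K c] in simp)
  moreover have "coeff (Wsum (Suc K) c) (2 * Suc K) = 0" using Suc.prems by simp
  ultimately have "c (Suc K) * (-1) ^ Suc K = 0"
    unfolding eq coeff_add coeff_smult coeff_Wpow_top by simp
  then have cK: "c (Suc K) = 0" by simp
  with Suc.prems eq have "Wsum K c = 0" by simp
  with Suc.IH cK Suc.prems show ?case by (cases "k = Suc K") auto
qed

lemma Wsum_extend: "K \<le> K' \<Longrightarrow> Wsum K c = Wsum K' (\<lambda>k. if k \<le> K then c k else 0)"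
  unfolding Wsum_def by (rule sum.mono_neutral_cong_left) auto

lemma Wsum_add: "Wsum K c + Wsum K d = Wsum K (\<lambda>k. c k + d k)"
  unfolding Wsum_def by (simp add: sum.distrib smult_add_left)

lemma Wsum_single: "m \<le> K \<Longrightarrow> smult a (Wp ^ m) = Wsum K (\<lambda>k. if k = m then a else 0)"
  unfolding Wsum_def by (simp add: if_distrib[of "\<lambda>x. smult x _"] cong: if_cong)

lemma poly_even_pcompose:
  fixes P :: "real poly"
  assumes "\<forall>t. poly P (-t) = poly P t"
  shows "pcompose P [:0, -1:] = P"
proof -
  have "poly (pcompose P [:0, -1:]) = poly P"
  proof
    fix t :: real
    have "poly [:0, -1:] t = - t" by (simp add: algebra_simps)
    then show "poly (pcompose P [:0, -1:]) t = poly P t"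
      unfolding poly_pcompose using assms by simp
  qed
  then show ?thesis by (simp add: poly_eq_poly_eq_iff)
qed

lemma even_Wspan: "\<forall>t::real. poly P (-t) = poly P t \<Longrightarrow> \<exists>c K. P = Wsum K c"
proof (induction "degree P" arbitrary: P rule: less_induct)
  case less
  show ?case
  proof (cases "degree P = 0")
    case True
    then obtain a where "P = [:a:]" by (metis degree_eq_zeroE)
    then have "P = Wsum 0 (\<lambda>_. a)" by (simp add: Wsum_def)
    then show ?thesis by blast
  next
    case False
    define d where "d = degree P"
    define L where "L = lead_coeff P"
    have P0: "P \<noteq> 0" using False by auto
    have L0: "L \<noteq> 0" using P0 by (simp add: L_def)
    have "coeff (pcompose P [:0, -1:]) d = (-1) ^ d * coeff P d"
      using coeff_pcompose_linear[of P "-1" d] by simp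
    then have "L = (-1) ^ d * L" using poly_even_pcompose[OF less.prems] by (simp add: L_def d_def)
    then have "even d" using L0 by (cases "even d") auto
    then obtain m where dm: "d = 2 * m" by blast
    define Q where "Q = P - smult (L * (-1) ^ m) (Wp ^ m)"
    have cQ: "coeff Q d = 0"
      unfolding Q_def dm by (simp add: coeff_Wpow_top L_def d_def[symmetric] dm flip: power_add mult_2)
    have dQ: "degree Q \<le> d"
      unfolding Q_def d_def by (rule degree_diff_le) (auto simp: dm d_def[symmetric] intro: order_trans[OF degree_smult_le])
    have dQ': "degree Q < degree P"
    proof (rule ccontr)
      assume "\<not> degree Q < degree P"
      then have "degree Q = d" using dQ by (simp add: d_def)
      then have "Q = 0" using cQ by (metis leading_coeff_0_iff)
      then show False using \<open>degree Q = d\<close> False by (simp add: d_def)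
    qed
    have Qe: "\<forall>t. poly Q (-t) = poly Q t"
      using less.prems by (simp add: Q_def)
    obtain c K where QK: "Q = Wsum K c" using less.hyps[OF dQ' Qe] by blast
    define K' where "K' = max K m"
    have "P = Q + smult (L * (-1) ^ m) (Wp ^ m)" by (simp add: Q_def)
    also have "\<dots> = Wsum K' (\<lambda>k. if k \<le> K then c k else 0) + Wsum K' (\<lambda>k. if k = m then L * (-1) ^ m else 0)"
      unfolding QK by (subst Wsum_extend[of K K']) (auto simp: K'_def intro: Wsum_single)
    also have "\<dots> = Wsum K' (\<lambda>k. (if k \<le> K then c k else 0) + (if k = m then L * (-1) ^ m else 0))"
      by (rule Wsum_add)
    finally show ?thesis by blast
  qed
qed

lemma Xp_mult_eq_0: "Xp * P = 0 \<Longrightarrow> P = 0"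
  by (simp add: Xp_def)

lemma poly_Wsum_1: "poly (Wsum K c) 1 = c 0"
proof -
  have "poly (Wsum K c) 1 = (\<Sum>k\<le>K. c k * 0 ^ k)" by (simp add: Wsum_def poly_sum)
  also have "\<dots> = c 0" by (simp add: zero_power sum.atMost_shift)
  finally show ?thesis .
qed

lemma theta_uniq:
  fixes P :: "real poly"
  assumes ev: "\<forall>t. poly P (-t) = poly P t"
      and th: "theta a E P = 0"
      and p1: "poly P 1 = 0"
      and nz: "\<And>k. thetam a E (real (Suc k)) \<noteq> 0"
  shows "P = 0"
proof -
  obtain c K where PK: "P = Wsum K c" using even_Wspan[OF ev] by blast
  define c' where "c' = (\<lambda>k. if k \<le> K then c k else 0)"
  have PK': "P = Wsum K c'" unfolding PK c'_def Wsum_def by (rule sum.cong) auto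
  have cK: "c' (Suc K) = 0" by (simp add: c'_def)
  have "Xp * Wsum K (\<lambda>k. c' k * theta0 a E (real k) + c' (Suc k) * thetam a E (real (Suc k))) = 0"
    using th theta_Wsum[of c' K a E, OF cK] PK' by simp
  then have W0: "Wsum K (\<lambda>k. c' k * theta0 a E (real k) + c' (Suc k) * thetam a E (real (Suc k))) = 0"
    by (rule Xp_mult_eq_0)
  have rel: "c' k * theta0 a E (real k) + c' (Suc k) * thetam a E (real (Suc k)) = 0" for k
  proof (cases "k \<le> K")
    case True then show ?thesis using Wsum_zero_imp[OF W0 True] by simp
  next
    case False then show ?thesis by (simp add: c'_def)
  qed
  have c0: "c' 0 = 0" using p1 PK' poly_Wsum_1 by simp
  have call: "c' k = 0" for k
  proof (induction k)
    case 0 then show ?case by (rule c0)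
  next
    case (Suc k)
    then show ?case using rel[of k] nz[of k] by simp
  qed
  show ?thesis unfolding PK' Wsum_def by (simp add: call)
qed

definition alpha :: "nat \<Rightarrow> nat \<Rightarrow> nat \<Rightarrow> real" where
  "alpha \<mu> n k = (real ((n + \<mu>) choose n))\<^sup>2 * pochhammer (- real n) k * pochhammer (real n + 2 * real \<mu> + 1) k
     * pochhammer (real \<mu> + 1/2) k / (pochhammer (2 * real \<mu> + 1) k * pochhammer (real \<mu> + 1) k * fact k)"

lemma alpha_Suc: "alpha \<mu> n (Suc k) = alpha \<mu> n k * ((real k - real n) * (real n + 2 * real \<mu> + 1 + real k) * (real \<mu> + 1/2 + real k))
    / ((2 * real \<mu> + 1 + real k) * (real \<mu> + 1 + real k) * (real k + 1))"
proof -
  have p1: "pochhammer (2 * real \<mu> + 1) k > 0" by (rule pochhammer_pos) simp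
  have p2: "pochhammer (real \<mu> + 1) k > 0" by (rule pochhammer_pos) simp
  have p3: "(2 * real \<mu> + 1 + real k) > 0" "(real \<mu> + 1 + real k) > 0" by simp_all
  show ?thesis
    unfolding alpha_def pochhammer_Suc fact_Suc
    using p1 p2 p3 by (simp add: field_simps)
qed

lemma alpha_rel: "alpha \<mu> n k * theta0 (2 * real \<mu> + 2) (real n * (real n + 2 * real \<mu> + 1)) (real k)
   + alpha \<mu> n (Suc k) * thetam (2 * real \<mu> + 2) (real n * (real n + 2 * real \<mu> + 1)) (real (Suc k)) = 0"
proof -
  have p3: "(2 * real \<mu> + 1 + real k) > 0" "(real \<mu> + 1 + real k) > 0" "real k + 1 > 0" by simp_all
  have key: "((real k - real n) * (real n + 2 * real \<mu> + 1 + real k) * (real \<mu> + 1/2 + real k))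
       * thetam (2 * real \<mu> + 2) (real n * (real n + 2 * real \<mu> + 1)) (real (Suc k))
     = - theta0 (2 * real \<mu> + 2) (real n * (real n + 2 * real \<mu> + 1)) (real k)
       * ((2 * real \<mu> + 1 + real k) * (real \<mu> + 1 + real k) * (real k + 1))"
    unfolding thetam_def theta0_def by (simp add: algebra_simps)
  define N where "N = (real k - real n) * (real n + 2 * real \<mu> + 1 + real k) * (real \<mu> + 1/2 + real k)"
  define Dn where "Dn = (2 * real \<mu> + 1 + real k) * (real \<mu> + 1 + real k) * (real k + 1)"
  define Tm where "Tm = thetam (2 * real \<mu> + 2) (real n * (real n + 2 * real \<mu> + 1)) (real (Suc k))"
  define T0 where "T0 = theta0 (2 * real \<mu> + 2) (real n * (real n + 2 * real \<mu> + 1)) (real k)"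
  have Dn0: "Dn \<noteq> 0" using p3 by (simp add: Dn_def)
  have key': "N * Tm = - T0 * Dn" using key by (simp add: N_def Dn_def Tm_def T0_def)
  have "alpha \<mu> n (Suc k) * Tm = alpha \<mu> n k * (N * Tm) / Dn"
    unfolding alpha_Suc N_def Dn_def by simp
  also have "\<dots> = - alpha \<mu> n k * T0" unfolding key' using Dn0 by simp
  finally show ?thesis by (simp add: Tm_def T0_def)
qed

lemma alpha_vanish: "k > n \<Longrightarrow> alpha \<mu> n k = 0"
  by (simp add: alpha_def pochhammer_of_nat_eq_0_iff)

lemma jacobiP_minus: "jacobiP n a a (- t) = (-1) ^ n * jacobiP n a a t"
proof -
  have "jacobiP n a a (- t) = (\<Sum>s=0..n. (-1) ^ n * (real ((n + a) choose (n - s)) * real ((n + a) choose s)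
       * ((t + 1) / 2) ^ s * ((t - 1) / 2) ^ (n - s)))"
    unfolding jacobiP_def
  proof (rule sum.cong[OF refl])
    fix s assume "s \<in> {0..n}"
    then have sn: "s \<le> n" by simp
    have e1: "(- t - 1) / 2 = - ((t + 1) / 2)" by (simp add: field_simps)
    have e2: "(- t + 1) / 2 = - ((t - 1) / 2)" by (simp add: field_simps)
    have "((- t - 1) / 2) ^ s = (-1) ^ s * ((t + 1) / 2) ^ s"
      unfolding e1 by (rule power_minus)
    moreover have "((- t + 1) / 2) ^ (n - s) = (-1) ^ (n - s) * ((t - 1) / 2) ^ (n - s)"
      unfolding e2 by (rule power_minus)
    moreover have "(-1::real) ^ s * (-1) ^ (n - s) = (-1) ^ n"
      using sn by (simp add: power_add[symmetric])
    ultimately show "real ((n + a) choose (n - s)) * real ((n + a) choose s) * ((- t - 1) / 2) ^ s * ((- t + 1) / 2) ^ (n - s)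
       = (-1) ^ n * (real ((n + a) choose (n - s)) * real ((n + a) choose s) * ((t + 1) / 2) ^ s * ((t - 1) / 2) ^ (n - s))"
      by (simp add: algebra_simps)
  qed
  also have "\<dots> = (-1) ^ n * (\<Sum>s=0..n. real ((n + a) choose (n - s)) * real ((n + a) choose s)
       * ((t + 1) / 2) ^ s * ((t - 1) / 2) ^ (n - s))"
    by (simp add: sum_distrib_left)
  also have "(\<Sum>s=0..n. real ((n + a) choose (n - s)) * real ((n + a) choose s)
       * ((t + 1) / 2) ^ s * ((t - 1) / 2) ^ (n - s)) = jacobiP n a a t"
    unfolding jacobiP_def
    by (subst sum.atLeastAtMost_rev) (rule sum.cong, auto simp: mult_ac)
  finally show ?thesis .
qed

lemma jacobiP_one: "jacobiP n a b 1 = real ((n + a) choose n)"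
proof -
  have "jacobiP n a b 1 = (\<Sum>s=0..n. real ((n + a) choose (n - s)) * real ((n + b) choose s) * 0 ^ s * 1 ^ (n - s))"
    by (simp add: jacobiP_def)
  also have "\<dots> = real ((n + a) choose n)"
    by (simp add: zero_power atLeast0AtMost sum.atMost_shift)
  finally show ?thesis .
qed

lemma theta_diff: "theta a E (p - q) = theta a E p - theta a E q"
  using theta_add[of a E p "- q"] theta_smult[of a E "-1" q] by simp

lemma thetam_nz: "thetam (2 * real \<mu> + 2) E (real (Suc k)) \<noteq> 0"
proof -
  define x where "x = real (Suc k)"
  have x1: "x \<ge> 1" by (simp add: x_def)
  have P: "4 * x * (x - 1) + 2 * (2 * real \<mu> + 2) * x > 0"
  proof -
    have "4 * x * (x - 1) \<ge> 0" using x1 by simp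
    moreover have "2 * (2 * real \<mu> + 2) * x > 0" using x1 by (simp add: add_pos_nonneg)
    ultimately show ?thesis by linarith
  qed
  have Q: "2 * x + 2 * (2 * real \<mu> + 2) - 4 > 0" using x1 by simp
  have pos: "(4 * x * (x - 1) + 2 * (2 * real \<mu> + 2) * x) * (2 * x + 2 * (2 * real \<mu> + 2) - 4) > 0"
    using P Q by (rule mult_pos_pos)
  have eq: "thetam (2 * real \<mu> + 2) E x = - ((4 * x * (x - 1) + 2 * (2 * real \<mu> + 2) * x) * (2 * x + 2 * (2 * real \<mu> + 2) - 4))"
    unfolding thetam_def by (simp only: minus_mult_left)
  show ?thesis unfolding x_def[symmetric] eq using pos by linarith
qed

theorem clausen: "Yp \<mu> n * Yp \<mu> n = Wsum n (alpha \<mu> n)"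
proof -
  define a where "a = 2 * real \<mu> + 2"
  define E where "E = real n * (real n + 2 * real \<mu> + 1)"
  define D where "D = Yp \<mu> n * Yp \<mu> n - Wsum n (alpha \<mu> n)"
  have t1: "theta a E (Yp \<mu> n * Yp \<mu> n) = 0"
    unfolding a_def E_def by (rule theta_sq) (rule jac_ode)
  have t2: "theta a E (Wsum n (alpha \<mu> n)) = 0"
  proof -
    have "theta a E (Wsum n (alpha \<mu> n)) = Xp * Wsum n (\<lambda>k. alpha \<mu> n k * theta0 a E (real k) + alpha \<mu> n (Suc k) * thetam a E (real (Suc k)))"
      by (rule theta_Wsum) (simp add: alpha_vanish)
    also have "\<dots> = 0" unfolding a_def E_def alpha_rel by (simp add: Wsum_def)
    finally show ?thesis .
  qed
  have ev: "\<forall>t. poly D (-t) = poly D t"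
    by (simp add: D_def poly_Yp jacobiP_minus Wsum_def poly_sum power_mult_distrib[symmetric] algebra_simps)
  have p1: "poly D 1 = 0"
    by (simp add: D_def poly_Yp jacobiP_one poly_Wsum_1 alpha_def power2_eq_square)
  have "D = 0"
  proof (rule theta_uniq[OF ev _ p1])
    show "theta a E D = 0" by (simp add: D_def theta_diff t1 t2)
    show "thetam a E (real (Suc k)) \<noteq> 0" for k unfolding a_def by (rule thetam_nz)
  qed
  then show ?thesis by (simp add: D_def)
qed

lemma antideriv_ex: "\<exists>R. pderiv R = (Q :: real poly)"
proof -
  define R where "R = (\<Sum>i\<le>degree Q. monom (coeff Q i / real (Suc i)) (Suc i))"
  have "pderiv R = (\<Sum>i\<le>degree Q. monom (coeff Q i) i)"
    unfolding R_def pderiv_sum' pderiv_monom by (simp del: of_nat_Suc)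
  then show ?thesis using poly_as_sum_of_monoms[of Q] by metis
qed

lemma poly_has_integral:
  fixes R Q :: "real poly"
  assumes "pderiv R = Q" "a \<le> b"
  shows "(poly Q has_integral (poly R b - poly R a)) {a..b}"
proof (rule fundamental_theorem_of_calculus[OF assms(2)])
  fix x assume "x \<in> {a..b}"
  have "(poly R has_real_derivative poly Q x) (at x within {a..b})"
    using poly_DERIV[of R x] assms(1) by (simp add: has_field_derivative_at_within)
  then show "(poly R has_vector_derivative poly Q x) (at x within {a..b})"
    by (simp add: has_real_derivative_iff_has_vector_derivative)
qed

definition IQ :: "real poly \<Rightarrow> real" where
  "IQ Q = integral {-1..1} (poly Q)"

lemma IQ_eq: "pderiv R = Q \<Longrightarrow> IQ Q = poly R 1 - poly R (-1)"
  unfolding IQ_def by (rule integral_unique) (rule poly_has_integral, auto)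

lemma IQ_add: "IQ (P + Q) = IQ P + IQ Q"
proof -
  obtain R1 R2 where r: "pderiv R1 = P" "pderiv R2 = Q" using antideriv_ex by metis
  have rr: "pderiv (R1 + R2) = P + Q" using r by (simp add: pderiv_add)
  show ?thesis using IQ_eq[OF rr] IQ_eq[OF r(1)] IQ_eq[OF r(2)] by simp
qed

lemma IQ_smult: "IQ (smult c P) = c * IQ P"
proof -
  obtain R1 where r: "pderiv R1 = P" using antideriv_ex by metis
  have rr: "pderiv (smult c R1) = smult c P" using r by (simp add: pderiv_smult)
  have "IQ (smult c P) = c * (poly R1 1 - poly R1 (-1))" using IQ_eq[OF rr] by (simp add: algebra_simps)
  then show ?thesis using IQ_eq[OF r] by simp
qed

lemma IQ_zero: "IQ 0 = 0" using IQ_smult[of 0 0] by simp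

lemma IQ_sum: "IQ (sum f A) = (\<Sum>x\<in>A. IQ (f x))"
  by (induction A rule: infinite_finite_induct) (simp_all add: IQ_zero IQ_add)

lemma IQ_lin: "IQ (smult A U - smult B V) = A * IQ U - B * IQ V"
proof -
  have "smult A U - smult B V = smult A U + smult (-B) V" by simp
  then show ?thesis using IQ_add[of "smult A U" "smult (-B) V"] IQ_smult[of A U] IQ_smult[of "-B" V] by simp
qed

definition Wint :: "nat \<Rightarrow> real" where
  "Wint p = 2 * fact p / pochhammer (3/2) p"

lemma IQ_Wpow: "IQ (Wp ^ p) = Wint p"
proof (induction p)
  case 0
  have "IQ 1 = poly Xp 1 - poly Xp (-1)" by (rule IQ_eq) simp
  then show ?case by (simp add: Wint_def Xp_def)
next
  case (Suc p)
  have d: "pderiv (Xp * Wp ^ Suc p) = smult (2 * real p + 3) (Wp ^ Suc p) - smult (2 * real p + 2) (Wp ^ p)"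
  proof -
    have XX: "Xp * Xp = 1 - Wp" by (rule Xp_sq')
    define V where "V = Wp ^ p"
    define m where "m = (of_nat p :: real poly)"
    show ?thesis
      unfolding pderiv_mult pderiv_power_Suc pderiv_Wp pderiv_Xp
      unfolding smult_as_mult const_mult const_diff const_add const_two const_neg_two const_nat const_one const_numeral const_minus power_Suc of_nat_Suc
      unfolding V_def[symmetric] m_def[symmetric]
      using XX by algebra
  qed
  have "IQ (pderiv (Xp * Wp ^ Suc p)) = poly (Xp * Wp ^ Suc p) 1 - poly (Xp * Wp ^ Suc p) (-1)"
    by (rule IQ_eq) simp
  also have "\<dots> = 0" by (simp add: Xp_def)
  finally have "(2 * real p + 3) * IQ (Wp ^ Suc p) - (2 * real p + 2) * IQ (Wp ^ p) = 0"
    unfolding d IQ_lin .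
  then have "IQ (Wp ^ Suc p) = (2 * real p + 2) * Wint p / (2 * real p + 3)"
    unfolding Suc.IH by (simp add: field_simps del: power_Suc)
  also have "\<dots> = Wint (Suc p)"
  proof -
    have "pochhammer (3/2::real) p > 0" by (rule pochhammer_pos) simp
    then show ?thesis unfolding Wint_def pochhammer_Suc fact_Suc by (simp add: field_simps)
  qed
  finally show ?case .
qed

lemma x_integral:
  fixes Q :: "real poly"
  shows "((\<lambda>x. poly Q (cos (2 * x)) * sin (2 * x)) has_integral (IQ Q / 2)) {0..pi/2}"
proof -
  obtain R where R: "pderiv R = Q" using antideriv_ex by metis
  define f where "f = (\<lambda>x. - (1/2) * poly R (cos (2 * x)))"
  have der: "(f has_real_derivative (poly Q (cos (2 * x)) * sin (2 * x))) (at x)" for x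
  proof -
    have d1: "((\<lambda>x. cos (2 * x)) has_real_derivative (- sin (2 * x) * 2)) (at x)"
      by (rule derivative_eq_intros refl | simp)+
    have d2: "(poly R has_real_derivative poly Q (cos (2 * x))) (at (cos (2 * x)))"
      using poly_DERIV[of R "cos (2 * x)"] R by simp
    have "((\<lambda>x. poly R (cos (2 * x))) has_real_derivative (poly Q (cos (2 * x)) * (- sin (2 * x) * 2))) (at x)"
      by (rule DERIV_chain2[OF d2 d1])
    then have "((\<lambda>x. - (1/2) * poly R (cos (2 * x))) has_real_derivative (- (1/2) * (poly Q (cos (2 * x)) * (- sin (2 * x) * 2)))) (at x)"
      by (rule DERIV_cmult)
    then show ?thesis unfolding f_def by simp
  qed
  have "((\<lambda>x. poly Q (cos (2 * x)) * sin (2 * x)) has_integral (f (pi/2) - f 0)) {0..pi/2}"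
  proof (rule fundamental_theorem_of_calculus)
    show "0 \<le> pi / 2" by simp
    fix x assume "x \<in> {0..pi/2}"
    show "(f has_vector_derivative poly Q (cos (2 * x)) * sin (2 * x)) (at x within {0..pi / 2})"
      using der[of x] by (simp add: has_real_derivative_iff_has_vector_derivative has_vector_derivative_at_within)
  qed
  moreover have "f (pi/2) - f 0 = IQ Q / 2"
    unfolding f_def IQ_eq[OF R] by simp
  ultimately show ?thesis by simp
qed

lemma eigf_sq: "eigf \<mu> n x * eigf \<mu> n x = (normN \<mu> n)\<^sup>2 * poly (Wp ^ \<mu> * (Yp \<mu> n * Yp \<mu> n)) (cos (2 * x))"
proof -
  define c where "c = cos (2 * x)"
  have A: "0 \<le> (1 - c) ^ \<mu>" "0 \<le> (1 + c) ^ \<mu>" unfolding c_def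
    by (intro zero_le_power, simp add: cos_le_one, intro zero_le_power, smt (verit) cos_ge_minus_one)
  have s1: "sqrt ((1 - c) ^ \<mu>) * sqrt ((1 - c) ^ \<mu>) = (1 - c) ^ \<mu>" using A(1) by simp
  have s2: "sqrt ((1 + c) ^ \<mu>) * sqrt ((1 + c) ^ \<mu>) = (1 + c) ^ \<mu>" using A(2) by simp
  have "eigf \<mu> n x * eigf \<mu> n x = (normN \<mu> n)\<^sup>2 * ((sqrt ((1 - c) ^ \<mu>) * sqrt ((1 - c) ^ \<mu>)) * (sqrt ((1 + c) ^ \<mu>) * sqrt ((1 + c) ^ \<mu>)))
       * (jacobiP n \<mu> \<mu> c * jacobiP n \<mu> \<mu> c)"
    unfolding eigf_def c_def by (simp add: power2_eq_square mult_ac)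
  also have "\<dots> = (normN \<mu> n)\<^sup>2 * ((1 - c) * (1 + c)) ^ \<mu> * (jacobiP n \<mu> \<mu> c * jacobiP n \<mu> \<mu> c)"
    unfolding s1 s2 by (simp add: power_mult_distrib)
  also have "\<dots> = (normN \<mu> n)\<^sup>2 * poly (Wp ^ \<mu> * (Yp \<mu> n * Yp \<mu> n)) c"
    by (simp add: poly_Yp algebra_simps power2_eq_square)
  finally show ?thesis unfolding c_def .
qed

lemma prod_Wsum: "Wp ^ q * Wsum K c * Wsum L d = (\<Sum>a\<le>K. \<Sum>b\<le>L. smult (c a * d b) (Wp ^ (q + a + b)))"
proof -
  have "Wp ^ q * Wsum K c * Wsum L d = Wp ^ q * (Wsum K c * Wsum L d)" by (simp add: mult.assoc)
  also have "\<dots> = (\<Sum>a\<le>K. \<Sum>b\<le>L. Wp ^ q * (smult (c a) (Wp ^ a) * smult (d b) (Wp ^ b)))"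
    unfolding Wsum_def sum_product by (simp add: sum_distrib_left)
  also have "\<dots> = (\<Sum>a\<le>K. \<Sum>b\<le>L. smult (c a * d b) (Wp ^ (q + a + b)))"
    by (intro sum.cong refl) (simp add: power_add mult_ac)
  finally show ?thesis .
qed

lemma Ccoef_sum: "Ccoef \<mu> \<gamma> \<gamma> m m = (normN \<mu> \<gamma>)\<^sup>2 * (normN \<mu> m)\<^sup>2 / 2 *
   (\<Sum>a\<le>\<gamma>. \<Sum>b\<le>m. alpha \<mu> \<gamma> a * alpha \<mu> m b * Wint (2 * \<mu> + a + b))"
proof -
  define Qb where "Qb = Wp ^ (2 * \<mu>) * (Yp \<mu> \<gamma> * Yp \<mu> \<gamma>) * (Yp \<mu> m * Yp \<mu> m)"
  have ig: "eigf \<mu> \<gamma> x * eigf \<mu> \<gamma> x * eigf \<mu> m x * eigf \<mu> m x * sin (2 * x)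
     = (normN \<mu> \<gamma>)\<^sup>2 * (normN \<mu> m)\<^sup>2 * (poly Qb (cos (2 * x)) * sin (2 * x))" for x
  proof -
    have "eigf \<mu> \<gamma> x * eigf \<mu> \<gamma> x * eigf \<mu> m x * eigf \<mu> m x * sin (2 * x)
       = (eigf \<mu> \<gamma> x * eigf \<mu> \<gamma> x) * (eigf \<mu> m x * eigf \<mu> m x) * sin (2 * x)" by (simp add: mult_ac)
    also have "\<dots> = (normN \<mu> \<gamma>)\<^sup>2 * (normN \<mu> m)\<^sup>2 * (poly Qb (cos (2 * x)) * sin (2 * x))"
    proof -
      have w2: "Wp ^ (2 * \<mu>) = Wp ^ \<mu> * Wp ^ \<mu>" by (simp add: mult_2 power_add)
      show ?thesis unfolding eigf_sq Qb_def w2 by (simp add: mult_ac)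
    qed
    finally show ?thesis .
  qed
  have "((\<lambda>x. eigf \<mu> \<gamma> x * eigf \<mu> \<gamma> x * eigf \<mu> m x * eigf \<mu> m x * sin (2 * x)) has_integral
        ((normN \<mu> \<gamma>)\<^sup>2 * (normN \<mu> m)\<^sup>2 * (IQ Qb / 2))) {0..pi/2}"
    unfolding ig by (rule has_integral_mult_right) (rule x_integral)
  then have "Ccoef \<mu> \<gamma> \<gamma> m m = (normN \<mu> \<gamma>)\<^sup>2 * (normN \<mu> m)\<^sup>2 * (IQ Qb / 2)"
    unfolding Ccoef_def by (rule integral_unique)
  also have "IQ Qb = (\<Sum>a\<le>\<gamma>. \<Sum>b\<le>m. alpha \<mu> \<gamma> a * alpha \<mu> m b * Wint (2 * \<mu> + a + b))"
  proof -
    have "Qb = Wp ^ (2 * \<mu>) * Wsum \<gamma> (alpha \<mu> \<gamma>) * Wsum m (alpha \<mu> m)"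
      unfolding Qb_def clausen by (simp add: mult_ac)
    then show ?thesis unfolding prod_Wsum by (simp add: IQ_sum IQ_smult IQ_Wpow)
  qed
  finally show ?thesis by simp
qed

definition rr :: "nat \<Rightarrow> nat \<Rightarrow> nat \<Rightarrow> real" where
  "rr \<mu> k j = pochhammer (- real k) j * pochhammer (real k + 2 * real \<mu> + 1/2) j / (pochhammer (2 * real \<mu> + 1) j * fact j)"

definition Gs :: "nat \<Rightarrow> nat \<Rightarrow> nat \<Rightarrow> real" where
  "Gs \<mu> a k = (\<Sum>j\<le>k. rr \<mu> k j * Wint (2 * \<mu> + a + j))"

lemma half_not_int: "real n + 1/2 \<noteq> of_int k"
proof
  assume "real n + 1/2 = of_int k"
  then have "2 * real n + 1 = 2 * of_int k" by simp
  then have "real_of_int (2 * int n + 1) = real_of_int (2 * k)" by simp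
  then have "2 * int n + 1 = 2 * k" by (simp only: of_int_eq_iff)
  then show False by presburger
qed

lemma half_not_nat: "real n + 1/2 \<noteq> - real k"
  using half_not_int[of n "- int k"] by simp

lemma Wint_shift: "Wint (p + j) = Wint p * pochhammer (real p + 1) j / pochhammer (real p + 3/2) j"
proof -
  have f: "fact (p + j) = (fact p :: real) * pochhammer (real p + 1) j"
  proof -
    have "(fact (p + j) :: real) = pochhammer 1 (p + j)" by (rule pochhammer_fact)
    also have "\<dots> = pochhammer 1 p * pochhammer (1 + real p) j" by (rule pochhammer_product')
    finally show ?thesis by (simp add: pochhammer_fact add.commute)
  qed
  have q: "pochhammer (3/2::real) (p + j) = pochhammer (3/2) p * pochhammer (real p + 3/2) j"
  proof -
    have "pochhammer (3/2::real) (p + j) = pochhammer (3/2) p * pochhammer (3/2 + real p) j" by (rule pochhammer_product')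
    moreover have "3/2 + real p = real p + 3/2" by simp
    ultimately show ?thesis by simp
  qed
  have pos: "pochhammer (3/2::real) p > 0" "pochhammer (real p + 3/2) j > 0" by (simp_all add: pochhammer_pos add_pos_nonneg)
  show ?thesis unfolding Wint_def f q using pos by (simp add: field_simps)
qed

lemma rr_vanish: "j > k \<Longrightarrow> rr \<mu> k j = 0"
  by (simp add: rr_def pochhammer_of_nat_eq_0_iff)

lemma Gs_closed: "Gs \<mu> a k = Wint (2 * \<mu> + a) * pochhammer (1/2 - real k) k * pochhammer (- real a) k
    / (pochhammer (2 * real \<mu> + 1) k * pochhammer (- real k - 2 * real \<mu> - real a - 1/2) k)"
proof -
  define A where "A = real k + 2 * real \<mu> + 1/2"
  define B where "B = real (2 * \<mu> + a) + 1"
  define C where "C = 2 * real \<mu> + 1"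
  have C: "\<And>i::nat. C + real i \<noteq> 0" unfolding C_def by (simp add: add_pos_nonneg)
  have E: "\<And>i::int. A + B - C \<noteq> of_int i"
  proof -
    fix i :: int
    have "A + B - C = real (k + 2 * \<mu> + a) + 1/2" unfolding A_def B_def C_def by simp
    then show "A + B - C \<noteq> of_int i" using half_not_int[of "k + 2 * \<mu> + a" i] by simp
  qed
  have D: "1 + A + B - C - real k = real (2 * \<mu> + a) + 3/2" unfolding A_def B_def C_def by simp
  have trm: "rr \<mu> k j * Wint (2 * \<mu> + a + j) = Wint (2 * \<mu> + a) * saalt A B C k j" for j
    unfolding rr_def saalt_def Wint_shift D
    by (simp add: A_def B_def C_def field_simps)
  have S: "pochhammer C k * pochhammer (C - A - B) k * (\<Sum>j\<le>k. saalt A B C k j)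
          = pochhammer (C - A) k * pochhammer (C - B) k"
    by (rule saalschuetz[OF C E])
  have nz: "pochhammer C k * pochhammer (C - A - B) k \<noteq> 0"
  proof -
    have "pochhammer C k \<noteq> 0" using C by (auto simp: pochhammer_eq_0_iff) (metis add.commute add_eq_0_iff2)
    moreover have "pochhammer (C - A - B) k \<noteq> 0"
    proof
      assume "pochhammer (C - A - B) k = 0"
      then obtain i where "C - A - B = - real i" by (auto simp: pochhammer_eq_0_iff)
      moreover have "C - A - B = - real (k + 2 * \<mu> + a + 1) + 1/2" unfolding A_def B_def C_def by simp
      ultimately have "real (k + 2 * \<mu> + a + 1 - i) + 1/2 = 0 \<or> real i + 1/2 = real (k + 2*\<mu>+a+1)" by linarith
      then show False
        using half_not_int[of "k + 2 * \<mu> + a + 1 - i" 0] half_not_int[of i "int (k + 2*\<mu>+a+1)"] by auto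
    qed
    ultimately show ?thesis by simp
  qed
  have "Gs \<mu> a k = Wint (2 * \<mu> + a) * (\<Sum>j\<le>k. saalt A B C k j)"
    unfolding Gs_def trm by (simp add: sum_distrib_left)
  also have "(\<Sum>j\<le>k. saalt A B C k j) = pochhammer (C - A) k * pochhammer (C - B) k / (pochhammer C k * pochhammer (C - A - B) k)"
    using S nz by (simp add: field_simps)
  also have "C - A = 1/2 - real k" by (simp add: A_def C_def)
  also have "C - B = - real a" by (simp add: B_def C_def)
  also have "1/2 - real k - B = - real k - 2 * real \<mu> - real a - 1/2" by (simp add: B_def)
  finally show ?thesis by (simp add: C_def)
qed

lemma Gs_vanish: "a < k \<Longrightarrow> Gs \<mu> a k = 0"
  unfolding Gs_closed by (simp add: pochhammer_of_nat_eq_0_iff)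

definition hh :: "nat \<Rightarrow> nat \<Rightarrow> real" where
  "hh \<mu> k = rr \<mu> k k * Gs \<mu> k k"

lemma rr_diag_nz: "rr \<mu> k k \<noteq> 0"
proof -
  have "pochhammer (- real k) k \<noteq> 0" by (simp add: pochhammer_same)
  moreover have "pochhammer (real k + 2 * real \<mu> + 1/2) k > 0" by (rule pochhammer_pos) simp
  moreover have "pochhammer (2 * real \<mu> + 1) k > 0" by (rule pochhammer_pos) simp
  ultimately show ?thesis unfolding rr_def by simp
qed

lemma poch_half_nz: "pochhammer (real n + 1/2) k \<noteq> 0" "pochhammer (- real n - 1/2) k \<noteq> 0"
proof -
  show "pochhammer (real n + 1/2) k \<noteq> 0" by (rule order.strict_implies_not_eq[symmetric], rule pochhammer_pos) simp
  show "pochhammer (- real n - 1/2) k \<noteq> 0"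
  proof
    assume "pochhammer (- real n - 1/2) k = 0"
    then obtain i where "- real n - 1/2 = - real i" by (auto simp: pochhammer_eq_0_iff)
    then have "real n + 1/2 = of_int (int i)" by simp
    then show False using half_not_int by blast
  qed
qed

lemma Gs_diag_nz: "Gs \<mu> k k \<noteq> 0"
proof -
  have w: "Wint (2 * \<mu> + k) \<noteq> 0"
  proof -
    have "pochhammer (3/2::real) (2 * \<mu> + k) > 0" by (rule pochhammer_pos) simp
    then show ?thesis by (simp add: Wint_def)
  qed
  have p1: "pochhammer (1/2 - real k) k \<noteq> 0"
  proof
    assume "pochhammer (1/2 - real k) k = 0"
    then obtain i where "1/2 - real k = - real i" by (auto simp: pochhammer_eq_0_iff)
    then have "real i + 1/2 = of_int (int k)" by simp
    then show False using half_not_int by blast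
  qed
  have p2: "pochhammer (- real k) k \<noteq> 0" by (simp add: pochhammer_same)
  have p3: "pochhammer (2 * real \<mu> + 1) k > 0" by (rule pochhammer_pos) simp
  have p4: "pochhammer (- real k - 2 * real \<mu> - real k - 1/2) k \<noteq> 0"
    using poch_half_nz(2)[of "k + 2 * \<mu> + k" k] by (simp add: algebra_simps)
  show ?thesis unfolding Gs_closed using w p1 p2 p3 p4 by simp
qed

lemma hh_nz: "hh \<mu> k \<noteq> 0"
  unfolding hh_def using rr_diag_nz Gs_diag_nz by simp

lemma rr_zero: "rr \<mu> 0 a = (if a = 0 then 1 else 0)"
  by (simp add: rr_def pochhammer_0_left)

lemma expansion:
  assumes "\<forall>a>K. v a = 0"
  shows "\<exists>\<beta>. \<forall>a. v a = (\<Sum>l\<le>K. \<beta> l * rr \<mu> l a)"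
  using assms
proof (induction K arbitrary: v)
  case 0
  show ?case
  proof (intro exI allI)
    fix a show "v a = (\<Sum>l\<le>0. (\<lambda>_. v 0) l * rr \<mu> l a)"
      using 0 by (cases "a = 0") (auto simp: rr_zero)
  qed
next
  case (Suc K)
  define c where "c = v (Suc K) / rr \<mu> (Suc K) (Suc K)"
  define v' where "v' = (\<lambda>a. v a - c * rr \<mu> (Suc K) a)"
  have "\<forall>a>K. v' a = 0"
  proof (intro allI impI)
    fix a assume "a > K"
    show "v' a = 0"
    proof (cases "a = Suc K")
      case True then show ?thesis using rr_diag_nz[of \<mu> "Suc K"] by (simp add: v'_def c_def)
    next
      case False
      then have "a > Suc K" using \<open>a > K\<close> by simp
      then show ?thesis using Suc.prems by (simp add: v'_def rr_vanish)
    qed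
  qed
  then obtain \<beta> where b: "\<forall>a. v' a = (\<Sum>l\<le>K. \<beta> l * rr \<mu> l a)" using Suc.IH by blast
  show ?case
  proof (intro exI allI)
    fix a
    show "v a = (\<Sum>l\<le>Suc K. (\<beta>(Suc K := c)) l * rr \<mu> l a)"
      using b[rule_format, of a] by (simp add: v'_def)
  qed
qed

lemma Gs_ext: "l \<le> M \<Longrightarrow> Gs \<mu> b l = (\<Sum>j\<le>M. rr \<mu> l j * Wint (2 * \<mu> + b + j))"
  unfolding Gs_def by (rule sum.mono_neutral_left) (auto simp: rr_vanish)

lemma swap_lemma:
  assumes "l \<le> M"
  shows "(\<Sum>a\<le>M. rr \<mu> l a * (\<Sum>b\<le>M. v b * Wint (2 * \<mu> + a + b))) = (\<Sum>b\<le>M. v b * Gs \<mu> b l)"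
proof -
  have "(\<Sum>a\<le>M. rr \<mu> l a * (\<Sum>b\<le>M. v b * Wint (2 * \<mu> + a + b)))
      = (\<Sum>a\<le>M. \<Sum>b\<le>M. v b * (rr \<mu> l a * Wint (2 * \<mu> + b + a)))"
    by (simp add: sum_distrib_left mult_ac add_ac)
  also have "\<dots> = (\<Sum>b\<le>M. \<Sum>a\<le>M. v b * (rr \<mu> l a * Wint (2 * \<mu> + b + a)))"
    by (rule sum.swap)
  also have "\<dots> = (\<Sum>b\<le>M. v b * Gs \<mu> b l)"
    unfolding Gs_ext[OF assms] by (simp add: sum_distrib_left)
  finally show ?thesis .
qed

lemma term_zero: "a \<noteq> l \<Longrightarrow> l \<le> k \<Longrightarrow> rr \<mu> l a * Gs \<mu> a k = 0"
proof (cases "a < l")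
  case True
  assume "l \<le> k" then have "a < k" using True by simp
  then show ?thesis by (simp add: Gs_vanish)
next
  case False
  assume "a \<noteq> l" then have "a > l" using False by simp
  then show ?thesis by (simp add: rr_vanish)
qed

lemma orth_lt: "l < k \<Longrightarrow> l \<le> M \<Longrightarrow> (\<Sum>a\<le>M. rr \<mu> l a * Gs \<mu> a k) = 0"
proof (rule sum.neutral, rule ballI)
  fix a assume lk: "l < k"
  show "rr \<mu> l a * Gs \<mu> a k = 0"
  proof (cases "a = l")
    case True then show ?thesis using lk by (simp add: Gs_vanish)
  next
    case False then show ?thesis using term_zero[of a l k \<mu>] lk by simp
  qed
qed

lemma orth:
  assumes "l \<le> M" "k \<le> M"
  shows "(\<Sum>a\<le>M. rr \<mu> l a * Gs \<mu> a k) = (if l = k then hh \<mu> l else 0)"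
proof (cases "l = k")
  case True
  have "(\<Sum>a\<le>M. rr \<mu> l a * Gs \<mu> a l) = rr \<mu> l l * Gs \<mu> l l"
  proof -
    have "(\<Sum>a\<le>M. rr \<mu> l a * Gs \<mu> a l) = rr \<mu> l l * Gs \<mu> l l + (\<Sum>a\<in>{..M} - {l}. rr \<mu> l a * Gs \<mu> a l)"
      by (rule sum.remove) (use assms(1) in auto)
    also have "(\<Sum>a\<in>{..M} - {l}. rr \<mu> l a * Gs \<mu> a l) = 0"
      by (rule sum.neutral) (use term_zero[of _ l l \<mu>] in auto)
    finally show ?thesis by simp
  qed
  then show ?thesis using True by (simp add: hh_def)
next
  case False
  show ?thesis
  proof (cases "l < k")
    case True then show ?thesis using orth_lt assms by simp
  next
    case lk: False
    then have kl: "k < l" using False by simp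
    have "(\<Sum>a\<le>M. rr \<mu> l a * Gs \<mu> a k) = (\<Sum>a\<le>M. rr \<mu> l a * (\<Sum>b\<le>M. rr \<mu> k b * Wint (2 * \<mu> + a + b)))"
      unfolding Gs_ext[OF assms(2)] by (simp add: add_ac)
    also have "\<dots> = (\<Sum>b\<le>M. rr \<mu> k b * Gs \<mu> b l)" by (rule swap_lemma[OF assms(1)])
    also have "\<dots> = 0" by (rule orth_lt[OF kl assms(2)])
    finally show ?thesis using False by simp
  qed
qed

definition PiS :: "nat \<Rightarrow> nat \<Rightarrow> nat \<Rightarrow> real" where
  "PiS \<mu> n l = (\<Sum>a\<le>n. alpha \<mu> n a * Gs \<mu> a l)"

lemma phaseB:
  assumes gm: "\<gamma> \<le> m"
  shows "(\<Sum>a\<le>\<gamma>. \<Sum>b\<le>m. alpha \<mu> \<gamma> a * alpha \<mu> m b * Wint (2 * \<mu> + a + b))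
       = (\<Sum>l\<le>\<gamma>. PiS \<mu> \<gamma> l * PiS \<mu> m l / hh \<mu> l)"
proof -
  obtain \<beta> where b: "\<forall>a. alpha \<mu> \<gamma> a = (\<Sum>l\<le>\<gamma>. \<beta> l * rr \<mu> l a)"
    using expansion[of \<gamma> "alpha \<mu> \<gamma>" \<mu>] alpha_vanish by blast
  have ext1: "(\<Sum>a\<le>\<gamma>. f a) = (\<Sum>a\<le>m. f a)" if "\<And>a. a > \<gamma> \<Longrightarrow> f a = 0" for f :: "nat \<Rightarrow> real"
    by (rule sum.mono_neutral_left) (use gm that in auto)
  have Pim: "PiS \<mu> m l = (\<Sum>b\<le>m. alpha \<mu> m b * Gs \<mu> b l)" for l by (simp add: PiS_def)
  have Pig: "PiS \<mu> \<gamma> k = \<beta> k * hh \<mu> k" if "k \<le> \<gamma>" for k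
  proof -
    have "PiS \<mu> \<gamma> k = (\<Sum>a\<le>m. alpha \<mu> \<gamma> a * Gs \<mu> a k)"
      unfolding PiS_def by (rule ext1) (simp add: alpha_vanish)
    also have "\<dots> = (\<Sum>a\<le>m. \<Sum>l\<le>\<gamma>. \<beta> l * (rr \<mu> l a * Gs \<mu> a k))"
      by (simp add: b[rule_format] sum_distrib_right sum_distrib_left mult_ac)
    also have "\<dots> = (\<Sum>l\<le>\<gamma>. \<beta> l * (\<Sum>a\<le>m. rr \<mu> l a * Gs \<mu> a k))"
      by (subst sum.swap) (simp add: sum_distrib_left)
    also have "\<dots> = (\<Sum>l\<le>\<gamma>. \<beta> l * (if l = k then hh \<mu> l else 0))"
      by (intro sum.cong refl) (subst orth, use gm that in auto)
    also have "\<dots> = \<beta> k * hh \<mu> k" using that by (simp add: if_distrib[of "\<lambda>x. _ * x"] cong: if_cong)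
    finally show ?thesis .
  qed
  have "(\<Sum>a\<le>\<gamma>. \<Sum>b\<le>m. alpha \<mu> \<gamma> a * alpha \<mu> m b * Wint (2 * \<mu> + a + b))
      = (\<Sum>a\<le>m. alpha \<mu> \<gamma> a * (\<Sum>b\<le>m. alpha \<mu> m b * Wint (2 * \<mu> + a + b)))"
    by (subst ext1) (auto simp: alpha_vanish sum_distrib_left mult_ac)
  also have "\<dots> = (\<Sum>a\<le>m. \<Sum>l\<le>\<gamma>. \<beta> l * (rr \<mu> l a * (\<Sum>b\<le>m. alpha \<mu> m b * Wint (2 * \<mu> + a + b))))"
    by (simp add: b[rule_format] sum_distrib_right mult_ac)
  also have "\<dots> = (\<Sum>l\<le>\<gamma>. \<beta> l * (\<Sum>a\<le>m. rr \<mu> l a * (\<Sum>b\<le>m. alpha \<mu> m b * Wint (2 * \<mu> + a + b))))"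
    by (subst sum.swap) (simp add: sum_distrib_left)
  also have "\<dots> = (\<Sum>l\<le>\<gamma>. \<beta> l * PiS \<mu> m l)"
  proof (intro sum.cong refl)
    fix l assume "l \<in> {..\<gamma>}"
    then have "l \<le> m" using gm by simp
    then show "\<beta> l * (\<Sum>a\<le>m. rr \<mu> l a * (\<Sum>b\<le>m. alpha \<mu> m b * Wint (2 * \<mu> + a + b))) = \<beta> l * PiS \<mu> m l"
      by (simp add: swap_lemma Pim)
  qed
  also have "\<dots> = (\<Sum>l\<le>\<gamma>. PiS \<mu> \<gamma> l * PiS \<mu> m l / hh \<mu> l)"
    by (intro sum.cong refl) (simp add: Pig hh_nz)
  finally show ?thesis .
qed

definition H :: "nat \<Rightarrow> real" where "H k = pochhammer (1/2) k"

lemma H_pos: "H k > 0" unfolding H_def by (rule pochhammer_pos) simp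

lemma H_fact: "H k = fact (2 * k) / (4 ^ k * fact k)"
proof (induction k)
  case 0 then show ?case by (simp add: H_def)
next
  case (Suc k)
  have "H (Suc k) = H k * (1/2 + real k)" by (simp add: H_def pochhammer_Suc)
  also have "\<dots> = fact (2 * k) / (4 ^ k * fact k) * (1/2 + real k)" using Suc.IH by simp
  also have "\<dots> = fact (2 * k) * (2 * real k + 1) / (2 * 4 ^ k * fact k)"
    by (simp add: field_simps)
  also have "\<dots> = fact (2 * Suc k) / (4 ^ Suc k * fact (Suc k))"
  proof -
    have f2: "fact (2 * Suc k) = (fact (2 * k) :: real) * (2 * real k + 1) * (2 * (real k + 1))"
      by (simp add: fact_Suc algebra_simps)
    have f1: "fact (Suc k) = (fact k :: real) * (real k + 1)" by (simp add: fact_Suc algebra_simps)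
    have k1: "real k + 1 \<noteq> 0" by simp
    show ?thesis unfolding f2 f1 using k1 by (simp add: divide_simps)
  qed
  finally show ?case .
qed

lemma poch_nat1: "pochhammer (real k + 1) j = fact (k + j) / fact k"
proof -
  have "(fact (k + j) :: real) = pochhammer 1 (k + j)" by (rule pochhammer_fact)
  also have "\<dots> = fact k * pochhammer (1 + real k) j" by (simp add: pochhammer_product' pochhammer_fact)
  finally have "(fact (k + j) :: real) = fact k * pochhammer (real k + 1) j" by (simp add: add.commute)
  then show ?thesis by (simp add: field_simps)
qed

lemma poch_half: "pochhammer (real k + 1/2) j = H (k + j) / H k"
proof -
  have "H (k + j) = pochhammer (1/2) k * pochhammer (1/2 + real k) j" unfolding H_def by (rule pochhammer_product')
  then show ?thesis using H_pos[of k] by (simp add: H_def add.commute field_simps)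
qed

lemma poch_3half: "pochhammer (3/2) k = 2 * H (Suc k)"
  unfolding H_def pochhammer_rec by simp

lemma poch_neg_nat: "l \<le> n \<Longrightarrow> pochhammer (- real n) l = (-1) ^ l * fact n / fact (n - l)"
proof -
  assume ln: "l \<le> n"
  have e: "real n - real l + 1 = real (n - l) + 1" using ln by (simp add: of_nat_diff)
  have "pochhammer (- real n) l = (-1) ^ l * pochhammer (real n - real l + 1) l" by (rule pochhammer_minus)
  also have "\<dots> = (-1) ^ l * (fact n / fact (n - l))" unfolding e poch_nat1 using ln by simp
  finally show ?thesis by simp
qed

lemma poch_neg_half: "pochhammer (1/2 - real l) l = (-1) ^ l * H l"
proof -
  have "pochhammer (- (real l - 1/2)) l = (-1) ^ l * pochhammer (real l - 1/2 - real l + 1) l" by (rule pochhammer_minus)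
  then show ?thesis by (simp add: H_def)
qed

lemma poch_neg_gen: "pochhammer (- b) k = (-1) ^ k * pochhammer (b - real k + 1) k" for b :: real
  by (rule pochhammer_minus)

lemma Gamma_nat1: "Gamma (real k + 1) = fact k"
  using Gamma_fact[of k] by (simp add: add.commute)

lemma Gamma_half: "Gamma (real k + 1/2) = sqrt pi * H k"
proof -
  have "pochhammer (1/2::real) k = Gamma (1/2 + real k) / Gamma (1/2)"
  proof (rule pochhammer_Gamma)
    show "(1/2::real) \<notin> \<int>\<^sub>\<le>\<^sub>0"
    proof
      assume "(1/2::real) \<in> \<int>\<^sub>\<le>\<^sub>0"
      then obtain n where "(1/2::real) = real_of_int n" by (auto simp: nonpos_Ints_def)
      then show False using half_not_int[of 0 n] by simp
    qed
  qed
  moreover have "Gamma (1/2::real) = sqrt pi" by (rule Gamma_one_half_real)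
  moreover have "Gamma (1/2::real) > 0" by (rule Gamma_real_pos) simp
  ultimately show ?thesis by (simp add: H_def field_simps add.commute)
qed

lemma Pi_reindex:
  assumes "l \<le> n"
  shows "PiS \<mu> n l = (\<Sum>i\<le>n - l. alpha \<mu> n (l + i) * Gs \<mu> (l + i) l)"
proof -
  have "PiS \<mu> n l = (\<Sum>a\<in>{l..n}. alpha \<mu> n a * Gs \<mu> a l)"
    unfolding PiS_def by (rule sum.mono_neutral_right) (auto simp: Gs_vanish)
  also have "{l..n} = (\<lambda>i. l + i) ` {..n - l}"
    using assms apply (auto simp: image_iff)
    apply (rule_tac x="x - l" in bexI)
    apply auto
    done
  also have "(\<Sum>a\<in>(\<lambda>i. l + i) ` {..n - l}. alpha \<mu> n a * Gs \<mu> a l) = (\<Sum>i\<le>n - l. alpha \<mu> n (l + i) * Gs \<mu> (l + i) l)"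
    by (rule sum.reindex_cong[of "\<lambda>i. l + i"]) (auto simp: inj_on_def)
  finally show ?thesis .
qed

definition Kc :: "nat \<Rightarrow> nat \<Rightarrow> nat \<Rightarrow> real" where
  "Kc \<mu> n l = (real ((n + \<mu>) choose n))\<^sup>2 * 2 * fact (2 * \<mu>) * pochhammer (1/2 - real l) l
     * pochhammer (- real n) l * pochhammer (real n + 2 * real \<mu> + 1) l * pochhammer (real \<mu> + 1/2) l
     / (pochhammer (2 * real \<mu> + 1) l * pochhammer (real \<mu> + 1) l * pochhammer (3/2) (2 * \<mu> + 2 * l))"

lemma Pi_term:
  assumes ln: "l \<le> n"
  shows "alpha \<mu> n (l + i) * Gs \<mu> (l + i) l
     = Kc \<mu> n l * saalt (real n + 2 * real \<mu> + 1 + real l) (real \<mu> + 1/2 + real l) (real \<mu> + 1 + real l) (n - l) i"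
proof -
  have p1: "pochhammer (- real n) (l + i) = pochhammer (- real n) l * pochhammer (- real n + real l) i"
    by (rule pochhammer_product')
  have p2: "pochhammer (real n + 2 * real \<mu> + 1) (l + i) = pochhammer (real n + 2 * real \<mu> + 1) l * pochhammer (real n + 2 * real \<mu> + 1 + real l) i"
    by (rule pochhammer_product')
  have p3: "pochhammer (real \<mu> + 1/2) (l + i) = pochhammer (real \<mu> + 1/2) l * pochhammer (real \<mu> + 1/2 + real l) i"
    by (rule pochhammer_product')
  have p4: "pochhammer (2 * real \<mu> + 1) (l + i) = pochhammer (2 * real \<mu> + 1) l * pochhammer (2 * real \<mu> + 1 + real l) i"
    by (rule pochhammer_product')
  have p5: "pochhammer (real \<mu> + 1) (l + i) = pochhammer (real \<mu> + 1) l * pochhammer (real \<mu> + 1 + real l) i"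
    by (rule pochhammer_product')
  have p6: "fact (l + i) = fact i * pochhammer (real i + 1) l"
  proof -
    have "fact i * pochhammer (real i + 1) l = (fact (i + l) :: real)" using poch_nat1[of i l] by simp
    then show ?thesis by (simp add: add.commute)
  qed
  have p7: "pochhammer (- real (l + i)) l = (-1) ^ l * pochhammer (real i + 1) l"
    using poch_neg_gen[of "real (l + i)" l] by simp
  have p8: "pochhammer (- real l - 2 * real \<mu> - real (l + i) - 1/2) l = (-1) ^ l * pochhammer (real l + 2 * real \<mu> + real i + 3/2) l"
    using poch_neg_gen[of "real l + 2 * real \<mu> + real (l + i) + 1/2" l] by (simp add: algebra_simps)
  have p9: "Wint (2 * \<mu> + (l + i)) = 2 * fact (2 * \<mu> + l + i) / pochhammer (3/2) (2 * \<mu> + l + i)"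
    by (simp add: Wint_def add.assoc)
  have p10: "fact (2 * \<mu> + l + i) = fact (2 * \<mu>) * pochhammer (2 * real \<mu> + 1) l * pochhammer (2 * real \<mu> + 1 + real l) i"
  proof -
    have "(fact (2 * \<mu>) :: real) * pochhammer (real (2 * \<mu>) + 1) (l + i) = fact (2 * \<mu> + (l + i))"
      using poch_nat1[of "2 * \<mu>" "l + i"] by simp
    then have "fact (2 * \<mu> + (l + i)) = (fact (2 * \<mu>) :: real) * pochhammer (2 * real \<mu> + 1) (l + i)" by simp
    then show ?thesis unfolding p4 by (simp only: add.assoc mult.assoc)
  qed
  have p11: "pochhammer (3/2) (2 * \<mu> + l + i) * pochhammer (real l + 2 * real \<mu> + real i + 3/2) l
      = pochhammer (3/2) (2 * \<mu> + 2 * l) * pochhammer (2 * real \<mu> + 2 * real l + 3/2) i"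
  proof -
    have "pochhammer (3/2::real) (2 * \<mu> + l + i + l) = pochhammer (3/2) (2 * \<mu> + l + i) * pochhammer (3/2 + real (2 * \<mu> + l + i)) l"
      by (rule pochhammer_product')
    moreover have "pochhammer (3/2::real) (2 * \<mu> + 2 * l + i) = pochhammer (3/2) (2 * \<mu> + 2 * l) * pochhammer (3/2 + real (2 * \<mu> + 2 * l)) i"
      by (rule pochhammer_product')
    moreover have "2 * \<mu> + l + i + l = 2 * \<mu> + 2 * l + i" by simp
    ultimately show ?thesis by (simp add: algebra_simps)
  qed
  have nN: "- real (n - l) = - real n + real l" using ln by (simp add: of_nat_diff)
  have dD: "1 + (real n + 2 * real \<mu> + 1 + real l) + (real \<mu> + 1/2 + real l) - (real \<mu> + 1 + real l) - real (n - l)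
      = 2 * real \<mu> + 2 * real l + 3/2" using ln by (simp add: of_nat_diff)
  have pos: "pochhammer (real i + 1) l > 0" "pochhammer (2 * real \<mu> + 1) l > 0" "pochhammer (2 * real \<mu> + 1 + real l) i > 0"
    "pochhammer (real \<mu> + 1) l > 0" "pochhammer (real \<mu> + 1 + real l) i > 0"
    "pochhammer (3/2::real) (2 * \<mu> + l + i) > 0" "pochhammer (3/2::real) (2 * \<mu> + 2 * l) > 0"
    "pochhammer (2 * real \<mu> + 2 * real l + 3/2) i > 0" "pochhammer (real l + 2 * real \<mu> + real i + 3/2) l > 0"
    by (simp_all add: pochhammer_pos add_pos_nonneg)
  have eq11: "1 / pochhammer (3/2) (2 * \<mu> + l + i) / pochhammer (real l + 2 * real \<mu> + real i + 3/2) l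
      = 1 / (pochhammer (3/2) (2 * \<mu> + 2 * l) * pochhammer (2 * real \<mu> + 2 * real l + 3/2) i)"
    using p11 pos by (simp add: field_simps)
  show ?thesis
    unfolding alpha_def Gs_closed saalt_def Kc_def nN dD
    unfolding p1 p2 p3 p4 p5 p6 p7 p8 p9 p10
    using pos eq11 by (simp add: field_simps)
qed

lemma Pi_saal:
  assumes ln: "l \<le> n"
  shows "PiS \<mu> n l = Kc \<mu> n l * (pochhammer (- real n - real \<mu>) (n - l) * pochhammer (1/2) (n - l)
     / (pochhammer (real \<mu> + 1 + real l) (n - l) * pochhammer (- real n - 2 * real \<mu> - real l - 1/2) (n - l)))"
proof -
  define A where "A = real n + 2 * real \<mu> + 1 + real l"
  define B where "B = real \<mu> + 1/2 + real l"
  define C where "C = real \<mu> + 1 + real l"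
  have Cc: "\<And>k::nat. C + real k \<noteq> 0" unfolding C_def by (simp add: add_pos_nonneg)
  have E: "\<And>k::int. A + B - C \<noteq> of_int k"
  proof -
    fix k :: int
    have "A + B - C = real (n + 2 * \<mu> + l) + 1/2" unfolding A_def B_def C_def by simp
    then show "A + B - C \<noteq> of_int k" using half_not_int[of "n + 2 * \<mu> + l" k] by simp
  qed
  have S: "pochhammer C (n - l) * pochhammer (C - A - B) (n - l) * (\<Sum>j\<le>n - l. saalt A B C (n - l) j)
       = pochhammer (C - A) (n - l) * pochhammer (C - B) (n - l)"
    by (rule saalschuetz[OF Cc E])
  have e1: "C - A - B = - real n - 2 * real \<mu> - real l - 1/2" by (simp add: A_def B_def C_def)
  have e2: "C - A = - real n - real \<mu>" by (simp add: A_def C_def)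
  have e3: "C - B = 1/2" by (simp add: B_def C_def)
  have nz1: "pochhammer C (n - l) \<noteq> 0" using pochhammer_pos[of C "n - l"] by (simp add: C_def add_pos_nonneg)
  have nz2: "pochhammer (- real n - 2 * real \<mu> - real l - 1/2) (n - l) \<noteq> 0"
  proof -
    have e: "- real n - 2 * real \<mu> - real l - 1/2 = - real (n + 2 * \<mu> + l) - 1/2" by simp
    show ?thesis unfolding e by (rule poch_half_nz(2))
  qed
  have sum: "(\<Sum>j\<le>n - l. saalt A B C (n - l) j) = pochhammer (- real n - real \<mu>) (n - l) * pochhammer (1/2) (n - l)
     / (pochhammer C (n - l) * pochhammer (- real n - 2 * real \<mu> - real l - 1/2) (n - l))"
    using S[unfolded e1, unfolded e2 e3] nz1 nz2 by (simp add: field_simps)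
  have "PiS \<mu> n l = Kc \<mu> n l * (\<Sum>j\<le>n - l. saalt A B C (n - l) j)"
    unfolding Pi_reindex[OF ln] Pi_term[OF ln] A_def B_def C_def by (simp add: sum_distrib_left)
  then show ?thesis unfolding sum by (simp add: C_def)
qed

lemma Pi_final:
  assumes ln: "l \<le> n"
  shows "PiS \<mu> n l = fact (n + \<mu>) ^ 2 * fact (2 * \<mu>) * 4 ^ \<mu> * H l * H (\<mu> + l) * fact (n + 2 * \<mu> + l) * H (n - l)
     / (fact n * fact (n - l) * fact (n + 2 * \<mu>) * fact (2 * \<mu> + l) * fact (\<mu> + l) * H (n + l + 2 * \<mu> + 1))"
proof -
  define N where "N = n - l"
  have c0: "real ((n + \<mu>) choose n) = fact (n + \<mu>) / (fact n * fact \<mu>)"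
    by (simp add: binomial_fact)
  have q1: "pochhammer (1/2 - real l) l = (-1) ^ l * H l" by (rule poch_neg_half)
  have q2: "pochhammer (- real n) l = (-1) ^ l * fact n / fact (n - l)" by (rule poch_neg_nat[OF ln])
  have q3: "pochhammer (real n + 2 * real \<mu> + 1) l = fact (n + 2 * \<mu> + l) / fact (n + 2 * \<mu>)"
    using poch_nat1[of "n + 2 * \<mu>" l] by simp
  have q4: "pochhammer (real \<mu> + 1/2) l = H (\<mu> + l) / H \<mu>" by (rule poch_half)
  have q5: "pochhammer (2 * real \<mu> + 1) l = fact (2 * \<mu> + l) / fact (2 * \<mu>)"
    using poch_nat1[of "2 * \<mu>" l] by simp
  have q6: "pochhammer (real \<mu> + 1) l = fact (\<mu> + l) / fact \<mu>"
    using poch_nat1[of \<mu> l] by simp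
  have q7: "pochhammer (3/2) (2 * \<mu> + 2 * l) = 2 * H (2 * \<mu> + 2 * l + 1)"
    using poch_3half[of "2 * \<mu> + 2 * l"] by simp
  have q8: "pochhammer (- real n - real \<mu>) N = (-1) ^ N * pochhammer (real \<mu> + 1 + real l) N"
  proof -
    have a: "pochhammer (- real n - real \<mu>) N = pochhammer (- (real n + real \<mu>)) N"
      by (rule arg_cong[where f="\<lambda>x. pochhammer x N"]) simp
    have b: "pochhammer (- (real n + real \<mu>)) N = (-1) ^ N * pochhammer (real n + real \<mu> - real N + 1) N"
      by (rule poch_neg_gen)
    have c: "real n + real \<mu> - real N + 1 = real \<mu> + 1 + real l" using ln by (simp add: N_def of_nat_diff)
    show ?thesis by (simp only: a b c)
  qed
  have q9: "pochhammer (- real n - 2 * real \<mu> - real l - 1/2) N = (-1) ^ N * (H (n + l + 2 * \<mu> + 1) / H (2 * l + 2 * \<mu> + 1))"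
  proof -
    have a: "pochhammer (- real n - 2 * real \<mu> - real l - 1/2) N = pochhammer (- (real n + 2 * real \<mu> + real l + 1/2)) N"
      by (rule arg_cong[where f="\<lambda>x. pochhammer x N"]) simp
    have b: "pochhammer (- (real n + 2 * real \<mu> + real l + 1/2)) N = (-1) ^ N * pochhammer (real n + 2 * real \<mu> + real l + 1/2 - real N + 1) N"
      by (rule poch_neg_gen)
    have c: "real n + 2 * real \<mu> + real l + 1/2 - real N + 1 = real (2 * l + 2 * \<mu> + 1) + 1/2"
      using ln by (simp add: N_def of_nat_diff)
    have d: "pochhammer (real (2 * l + 2 * \<mu> + 1) + 1/2) N = H (2 * l + 2 * \<mu> + 1 + N) / H (2 * l + 2 * \<mu> + 1)"
      by (rule poch_half)
    have e: "2 * l + 2 * \<mu> + 1 + N = n + l + 2 * \<mu> + 1" using ln by (simp add: N_def)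
    show ?thesis by (simp only: a b c d e)
  qed
  have q10: "pochhammer (1/2) N = H N" by (simp add: H_def)
  have Hmu: "H \<mu> = fact (2 * \<mu>) / (4 ^ \<mu> * fact \<mu>)" by (rule H_fact)
  have pos: "H l > 0" "H (\<mu> + l) > 0" "H N > 0" "H (n + l + 2 * \<mu> + 1) > 0" "H (2 * l + 2 * \<mu> + 1) > 0"
     "H (2 * \<mu> + 2 * l + 1) > 0" "pochhammer (real \<mu> + 1 + real l) N > 0"
    by (simp_all add: H_pos pochhammer_pos add_pos_nonneg)
  have hh: "H (2 * l + 2 * \<mu> + 1) = H (2 * \<mu> + 2 * l + 1)" by (simp add: add_ac)
  show ?thesis
    unfolding Pi_saal[OF ln] N_def[symmetric] Kc_def c0 q1 q2 q3 q4 q5 q6 q7 q8 q9 q10 Hmu hh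
    using pos by (simp add: field_simps power2_eq_square)
qed

lemma G_nat: "Gamma (x :: real) = fact k" if "x = real k + 1" for k
  using that Gamma_nat1 by simp

lemma G_half: "Gamma (x :: real) = sqrt pi * H k" if "x = real k + 1/2" for k
  using that Gamma_half by simp

definition Om :: "nat \<Rightarrow> nat \<Rightarrow> real" where
  "Om \<mu> l = 2 * fact (2 * \<mu>) / ((4 * real l + 4 * real \<mu> + 1) * H (2 * \<mu>))"

lemma normN_sq: "(normN \<mu> n)\<^sup>2 = (2 * real n + 1 + 2 * real \<mu>) / 4 ^ \<mu> * (fact n * fact (n + 2 * \<mu>)) / (fact (n + \<mu>))\<^sup>2"
proof -
  have g1: "Gamma (real n + 1) = fact n" by (rule G_nat) simp
  have g2: "Gamma (real n + 2 * real \<mu> + 1) = fact (n + 2 * \<mu>)" by (rule G_nat) simp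
  have g3: "Gamma (real n + real \<mu> + 1) = fact (n + \<mu>)" by (rule G_nat) simp
  have p: "(2::real) ^ (2 * \<mu>) = 4 ^ \<mu>" by (simp add: power_mult)
  have nn: "0 \<le> (2 * real n + 1 + 2 * real \<mu>) / 4 ^ \<mu> * (fact n * fact (n + 2 * \<mu>)) / (fact (n + \<mu>))\<^sup>2"
    by simp
  show ?thesis unfolding normN_def omega_def g1 g2 g3 p using nn by simp
qed

lemma Mcoef_conv:
  assumes ln: "l \<le> n"
  shows "Mcoef \<mu> n l = (4 * real l + 4 * real \<mu> + 1) * H l * H (2 * \<mu>) * H (l + \<mu>) / (2 * fact (l + \<mu>) * fact (l + 2 * \<mu>))
     * ((2 * real \<mu> + 2 * real n + 1) * H (n - l) * fact (n + l + 2 * \<mu>) / (fact (n - l) * H (n + l + 2 * \<mu> + 1)))"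
proof -
  have g1: "Gamma (real l + 1/2) = sqrt pi * H l" by (rule G_half) simp
  have g2: "Gamma (2 * real \<mu> + 1/2) = sqrt pi * H (2 * \<mu>)" by (rule G_half) simp
  have g3: "Gamma (real l + real \<mu> + 1/2) = sqrt pi * H (l + \<mu>)" by (rule G_half) simp
  have g4: "Gamma (real l + real \<mu> + 1) = fact (l + \<mu>)" by (rule G_nat) simp
  have g5: "Gamma (real l + 2 * real \<mu> + 1) = fact (l + 2 * \<mu>)" by (rule G_nat) simp
  have g6: "Gamma (real n - real l + 1/2) = sqrt pi * H (n - l)" by (rule G_half) (use ln in \<open>simp add: of_nat_diff\<close>)
  have g7: "Gamma (real n + real l + 2 * real \<mu> + 1) = fact (n + l + 2 * \<mu>)" by (rule G_nat) simp
  have g8: "Gamma (real n - real l + 1) = fact (n - l)" by (rule G_nat) (use ln in \<open>simp add: of_nat_diff\<close>)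
  have g9: "Gamma (real n + real l + 2 * real \<mu> + 3/2) = sqrt pi * H (n + l + 2 * \<mu> + 1)" by (rule G_half) simp
  have pp: "pi powr (3/2) = pi * sqrt pi"
  proof -
    have a: "pi powr (1 + 1/2) = pi powr 1 * pi powr (1/2)" by (rule powr_add)
    have b: "(1::real) + 1/2 = 3/2" by simp
    from a show ?thesis unfolding b by (simp add: powr_half_sqrt)
  qed
  define sp where "sp = sqrt pi"
  have pp': "pi powr (3/2) = sp * sp * sp" unfolding pp sp_def by simp
  have pos: "H l > 0" "H (2 * \<mu>) > 0" "H (l + \<mu>) > 0" "H (n - l) > 0" "H (n + l + 2 * \<mu> + 1) > 0" "sp > 0"
    by (simp_all add: H_pos sp_def)
  show ?thesis unfolding Mcoef_def g1 g2 g3 g4 g5 g6 g7 g8 g9 pp' sp_def[symmetric]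
    using pos by (simp add: field_simps)
qed

lemma B1:
  assumes ln: "l \<le> n"
  shows "(normN \<mu> n)\<^sup>2 * PiS \<mu> n l = Mcoef \<mu> n l * Om \<mu> l"
proof -
  have pos: "H l > 0" "H (2 * \<mu>) > 0" "H (l + \<mu>) > 0" "H (n - l) > 0" "H (n + l + 2 * \<mu> + 1) > 0"
    by (simp_all add: H_pos)
  have e1: "H (\<mu> + l) = H (l + \<mu>)" by (simp add: add.commute)
  have e2: "fact (n + 2 * \<mu> + l) = fact (n + l + 2 * \<mu>)" by (simp add: add_ac)
  have e3: "fact (2 * \<mu> + l) = fact (l + 2 * \<mu>)" by (simp add: add.commute)
  have e4: "fact (\<mu> + l) = fact (l + \<mu>)" by (simp add: add.commute)
  have c: "4 * real l + 4 * real \<mu> + 1 > 0" by (simp add: add_pos_nonneg)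
  show ?thesis
    unfolding normN_sq Pi_final[OF ln] Mcoef_conv[OF ln] Om_def e1 e2 e3 e4
    using pos c by (simp add: divide_simps power2_eq_square)
qed

lemma hh_closed: "hh \<mu> l = 2 ^ (4 * \<mu> + 1) * fact (2 * l) * (fact (2 * \<mu>))\<^sup>2 / ((4 * real l + 4 * real \<mu> + 1) * fact (2 * l + 4 * \<mu>))"
proof -
  have r1: "pochhammer (- real l) l = (-1) ^ l * fact l" by (rule pochhammer_same)
  have r2: "pochhammer (real l + 2 * real \<mu> + 1/2) l = H (2 * l + 2 * \<mu>) / H (l + 2 * \<mu>)"
  proof -
    have a: "real l + 2 * real \<mu> + 1/2 = real (l + 2 * \<mu>) + 1/2" by simp
    have b: "l + 2 * \<mu> + l = 2 * l + 2 * \<mu>" by simp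
    show ?thesis by (simp only: a poch_half b)
  qed
  have r3: "pochhammer (2 * real \<mu> + 1) l = fact (2 * \<mu> + l) / fact (2 * \<mu>)"
    using poch_nat1[of "2 * \<mu>" l] by simp
  have r4: "pochhammer (1/2 - real l) l = (-1) ^ l * H l" by (rule poch_neg_half)
  have r5: "pochhammer (- real l - 2 * real \<mu> - real l - 1/2) l = (-1) ^ l * (H (2 * l + 2 * \<mu> + 1) / H (l + 2 * \<mu> + 1))"
  proof -
    have a: "pochhammer (- real l - 2 * real \<mu> - real l - 1/2) l = pochhammer (- (2 * real l + 2 * real \<mu> + 1/2)) l"
      by (rule arg_cong[where f="\<lambda>x. pochhammer x l"]) simp
    have b: "pochhammer (- (2 * real l + 2 * real \<mu> + 1/2)) l = (-1) ^ l * pochhammer (2 * real l + 2 * real \<mu> + 1/2 - real l + 1) l"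
      by (rule poch_neg_gen)
    have c: "2 * real l + 2 * real \<mu> + 1/2 - real l + 1 = real (l + 2 * \<mu> + 1) + 1/2" by simp
    have d: "pochhammer (real (l + 2 * \<mu> + 1) + 1/2) l = H (l + 2 * \<mu> + 1 + l) / H (l + 2 * \<mu> + 1)" by (rule poch_half)
    have e: "l + 2 * \<mu> + 1 + l = 2 * l + 2 * \<mu> + 1" by simp
    show ?thesis by (simp only: a b c d e)
  qed
  have r6: "Wint (2 * \<mu> + l) = fact (2 * \<mu> + l) / H (l + 2 * \<mu> + 1)"
  proof -
    have "pochhammer (3/2::real) (2 * \<mu> + l) = 2 * H (Suc (2 * \<mu> + l))" by (rule poch_3half)
    moreover have "Suc (2 * \<mu> + l) = l + 2 * \<mu> + 1" by simp
    ultimately show ?thesis unfolding Wint_def by simp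
  qed
  have r7: "H (2 * l + 2 * \<mu> + 1) = H (2 * l + 2 * \<mu>) * (real (2 * l + 2 * \<mu>) + 1/2)"
    unfolding H_def by (simp add: pochhammer_Suc)
  have r8: "H l = fact (2 * l) / (4 ^ l * fact l)" by (rule H_fact)
  have r9: "H (l + 2 * \<mu>) = fact (2 * l + 4 * \<mu>) / (4 ^ (l + 2 * \<mu>) * fact (l + 2 * \<mu>))"
  proof -
    have a: "2 * (l + 2 * \<mu>) = 2 * l + 4 * \<mu>" by simp
    show ?thesis using H_fact[of "l + 2 * \<mu>"] by (simp only: a)
  qed
  have e3: "fact (2 * \<mu> + l) = fact (l + 2 * \<mu>)" by (simp add: add.commute)
  have pos: "H (2 * l + 2 * \<mu>) > 0" "H (l + 2 * \<mu> + 1) > 0" by (simp_all add: H_pos)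
  have pw: "(2::real) ^ (4 * \<mu> + 1) = 2 * 4 ^ (2 * \<mu>)" by (simp add: power_add power_mult)
  have c: "4 * real l + 4 * real \<mu> + 1 > 0" by (simp add: add_pos_nonneg)
  show ?thesis
    unfolding hh_def rr_def Gs_closed r1 r2 r3 r4 r5 r6 r7 r8 r9 e3 pw
    using pos c by (simp add: divide_simps power_add power2_eq_square)
qed

lemma B3: "(Om \<mu> l)\<^sup>2 / hh \<mu> l = xi \<mu> l"
proof -
  have g1: "Gamma (2 * real l + 4 * real \<mu> + 1) = fact (2 * l + 4 * \<mu>)" by (rule G_nat) simp
  have g2: "Gamma (2 * real l + 1) = fact (2 * l)" by (rule G_nat) simp
  have g3: "Gamma (2 * real \<mu> + 1/2) = sqrt pi * H (2 * \<mu>)" by (rule G_half) simp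
  have pw: "(2::real) powr (1 - 4 * real \<mu>) = 2 / 4 ^ (2 * \<mu>)"
  proof -
    have a: "(2::real) powr (1 - 4 * real \<mu>) = 2 powr 1 / 2 powr (4 * real \<mu>)" by (rule powr_diff)
    have b: "(2::real) powr (4 * real \<mu>) = 2 ^ (4 * \<mu>)"
      using powr_realpow[of 2 "4 * \<mu>"] by simp
    have c: "(2::real) ^ (4 * \<mu>) = 4 ^ (2 * \<mu>)"
    proof -
      have "(2::real) ^ (4 * \<mu>) = (2 ^ 2) ^ (2 * \<mu>)" by (simp only: power_mult[symmetric]) simp
      then show ?thesis by simp
    qed
    show ?thesis unfolding a b c by simp
  qed
  have pw2: "(2::real) ^ (4 * \<mu> + 1) = 2 * 4 ^ (2 * \<mu>)" by (simp add: power_add power_mult)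
  have pos: "H (2 * \<mu>) > 0" by (simp add: H_pos)
  have c: "4 * real l + 4 * real \<mu> + 1 > 0" by (simp add: add_pos_nonneg)
  have sp: "sqrt pi * sqrt pi = pi" by simp
  have pi0: "pi > 0" by simp
  show ?thesis
    unfolding Om_def hh_closed xi_def g1 g2 g3 pw pw2 power_mult_distrib
    using pos c pi0 by (simp add: divide_simps power2_eq_square)
qed

theorem lemma5p4:
  fixes \<mu> \<gamma> m :: nat
  assumes "\<gamma> \<le> m"
  shows "Ccoef \<mu> \<gamma> \<gamma> m m = 1/2 * (\<Sum>l=0..\<gamma>. Mcoef \<mu> \<gamma> l * Mcoef \<mu> m l * xi \<mu> l)"
proof -
  have "Ccoef \<mu> \<gamma> \<gamma> m m = (normN \<mu> \<gamma>)\<^sup>2 * (normN \<mu> m)\<^sup>2 / 2 * (\<Sum>l\<le>\<gamma>. PiS \<mu> \<gamma> l * PiS \<mu> m l / hh \<mu> l)"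
    unfolding Ccoef_sum phaseB[OF assms] ..
  also have "\<dots> = 1/2 * (\<Sum>l\<le>\<gamma>. ((normN \<mu> \<gamma>)\<^sup>2 * PiS \<mu> \<gamma> l) * ((normN \<mu> m)\<^sup>2 * PiS \<mu> m l) / hh \<mu> l)"
    by (simp add: sum_distrib_left mult_ac)
  also have "\<dots> = 1/2 * (\<Sum>l\<le>\<gamma>. Mcoef \<mu> \<gamma> l * Mcoef \<mu> m l * ((Om \<mu> l)\<^sup>2 / hh \<mu> l))"
  proof -
    have "((normN \<mu> \<gamma>)\<^sup>2 * PiS \<mu> \<gamma> l) * ((normN \<mu> m)\<^sup>2 * PiS \<mu> m l) / hh \<mu> l
        = Mcoef \<mu> \<gamma> l * Mcoef \<mu> m l * ((Om \<mu> l)\<^sup>2 / hh \<mu> l)" if "l \<in> {..\<gamma>}" for l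
    proof -
      have l1: "l \<le> \<gamma>" and l2: "l \<le> m" using that assms by auto
      show ?thesis unfolding B1[OF l1] B1[OF l2] by (simp add: power2_eq_square)
    qed
    then show ?thesis by (intro arg_cong[where f="\<lambda>x. 1/2 * x"] sum.cong) auto
  qed
  also have "\<dots> = 1/2 * (\<Sum>l=0..\<gamma>. Mcoef \<mu> \<gamma> l * Mcoef \<mu> m l * xi \<mu> l)"
    by (simp add: B3 atLeast0AtMost)
  finally show ?thesis .
qed

end
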